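(* Let $\rho_{AB}$ be a density matrix on $\mathcal H_A\otimes\mathcal H_B$, let $\Phi:\mathbf L(\mathcal H_A)\to\mathbf L(\mathcal H_{A'})$ and $\Psi:\mathbf L(\mathcal H_B)\to\mathbf L(\mathcal H_{B'})$ be completely positive trace-preserving maps, and let $\sigma_{A'B'}=(\Phi\otimes\Psi)(\rho_{AB})$. Then $\mu_{\mathrm{ent}}(\rho_{AB})\geq\mu_{\mathrm{ent}}(\sigma_{A'B'})$.
   Context: All Hilbert spaces are finite-dimensional. For a bipartite density matrix $\rho_{AB}$ with reduced states $\rho_A,\rho_B$, the maximal correlation is $\mu(\rho_{AB})=\max |\mathrm{tr}(\rho_{AB}\, X_A\otimes Y_B^\dagger)|$ over $X_A\in\mathbf L(\mathcal H_A)$, $Y_B\in\mathbf L(\mathcal H_B)$ with $\mathrm{tr}(\rho_A X_A)=\mathrm{tr}(\rho_B Y_B)=0$ and $\mathrm{tr}(\rho_A X_AX_A^\dagger)=\mathrm{tr}(\rho_B Y_BY_B^\dagger)=1$. The maximal entanglement is $\mu_{\mathrm{ent}}(\rho_{AB})=\inf \max_i \mu(\tau^{(i)}_{AB})$, the infimum over all decompositions $\rho_{AB}=\sum_i p_i\tau^{(i)}_{AB}$ with $p_i\ge0$ and $\tau^{(i)}_{AB}$ density matrices on $\mathcal H_A\otimes\mathcal H_B$. *)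

theory Defs
  imports "Jordan_Normal_Form.Matrix"
begin

text \<open>Finite-dimensional Hilbert spaces are modelled as C^d; operators on them as
  complex d x d matrices (JNF type complex mat). The bipartite space H_A (x) H_B
  with dim H_A = dA, dim H_B = dB is C^(dA*dB) with the product basis ordered
  lexicographically: index (i,k) corresponds to i*dB + k.\<close>

definition mtrace :: "complex mat \<Rightarrow> complex" where
  "mtrace M = (\<Sum>i<dim_row M. M $$ (i, i))"

definition dagger :: "complex mat \<Rightarrow> complex mat" where
  "dagger M = mat (dim_col M) (dim_row M) (\<lambda>(i, j). cnj (M $$ (j, i)))"

definition kron :: "complex mat \<Rightarrow> complex mat \<Rightarrow> complex mat" where
  "kron A B = mat (dim_row A * dim_row B) (dim_col A * dim_col B)
     (\<lambda>(r, c). A $$ (r div dim_row B, c div dim_col B) * B $$ (r mod dim_row B, c mod dim_col B))"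

definition psd :: "nat \<Rightarrow> complex mat \<Rightarrow> bool" where
  "psd n M \<longleftrightarrow> M \<in> carrier_mat n n \<and>
     (\<forall>v :: nat \<Rightarrow> complex.
        let q = (\<Sum>i<n. \<Sum>j<n. cnj (v i) * M $$ (i, j) * v j) in Im q = 0 \<and> Re q \<ge> 0)"

definition density :: "nat \<Rightarrow> complex mat \<Rightarrow> bool" where
  "density n M \<longleftrightarrow> psd n M \<and> mtrace M = 1"

definition ptrace_B :: "nat \<Rightarrow> nat \<Rightarrow> complex mat \<Rightarrow> complex mat" where
  "ptrace_B dA dB M = mat dA dA (\<lambda>(i, j). \<Sum>k<dB. M $$ (i * dB + k, j * dB + k))"

definition ptrace_A :: "nat \<Rightarrow> nat \<Rightarrow> complex mat \<Rightarrow> complex mat" where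
  "ptrace_A dA dB M = mat dB dB (\<lambda>(k, l). \<Sum>i<dA. M $$ (i * dB + k, i * dB + l))"

definition munit :: "nat \<Rightarrow> nat \<Rightarrow> nat \<Rightarrow> complex mat" where
  "munit d i j = mat d d (\<lambda>(a, b). if a = i \<and> b = j then 1 else 0)"

definition lin_map :: "nat \<Rightarrow> nat \<Rightarrow> (complex mat \<Rightarrow> complex mat) \<Rightarrow> bool" where
  "lin_map d d' \<Phi> \<longleftrightarrow>
     (\<forall>X \<in> carrier_mat d d. \<Phi> X \<in> carrier_mat d' d') \<and>
     (\<forall>X \<in> carrier_mat d d. \<forall>Y \<in> carrier_mat d d. \<Phi> (X + Y) = \<Phi> X + \<Phi> Y) \<and>
     (\<forall>X \<in> carrier_mat d d. \<forall>c. \<Phi> (c \<cdot>\<^sub>m X) = c \<cdot>\<^sub>m \<Phi> X)"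

text \<open>Amplification id_k (x) Phi acting on L(C^k (x) C^d): applies Phi blockwise.\<close>
definition ampl :: "nat \<Rightarrow> nat \<Rightarrow> nat \<Rightarrow> (complex mat \<Rightarrow> complex mat) \<Rightarrow> complex mat \<Rightarrow> complex mat" where
  "ampl d d' k \<Phi> M = mat (k * d') (k * d')
     (\<lambda>(r, c). \<Phi> (mat d d (\<lambda>(i, j). M $$ ((r div d') * d + i, (c div d') * d + j)))
                 $$ (r mod d', c mod d'))"

definition completely_positive :: "nat \<Rightarrow> nat \<Rightarrow> (complex mat \<Rightarrow> complex mat) \<Rightarrow> bool" where
  "completely_positive d d' \<Phi> \<longleftrightarrow>
     (\<forall>k M. psd (k * d) M \<longrightarrow> psd (k * d') (ampl d d' k \<Phi> M))"

definition trace_preserving :: "nat \<Rightarrow> (complex mat \<Rightarrow> complex mat) \<Rightarrow> bool" where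
  "trace_preserving d \<Phi> \<longleftrightarrow> (\<forall>X \<in> carrier_mat d d. mtrace (\<Phi> X) = mtrace X)"

definition cptp :: "nat \<Rightarrow> nat \<Rightarrow> (complex mat \<Rightarrow> complex mat) \<Rightarrow> bool" where
  "cptp d d' \<Phi> \<longleftrightarrow> lin_map d d' \<Phi> \<and> completely_positive d d' \<Phi> \<and> trace_preserving d \<Phi>"

text \<open>(Phi (x) Psi)(M): the linear extension of E_ij (x) E_kl |-> Phi(E_ij) (x) Psi(E_kl).\<close>
definition tensor_map :: "nat \<Rightarrow> nat \<Rightarrow> nat \<Rightarrow> nat \<Rightarrow> (complex mat \<Rightarrow> complex mat)
     \<Rightarrow> (complex mat \<Rightarrow> complex mat) \<Rightarrow> complex mat \<Rightarrow> complex mat" where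
  "tensor_map dA dB dA' dB' \<Phi> \<Psi> M = mat (dA' * dB') (dA' * dB')
     (\<lambda>(r, c). \<Sum>i<dA. \<Sum>j<dA. \<Sum>k<dB. \<Sum>l<dB.
        M $$ (i * dB + k, j * dB + l) * \<Phi> (munit dA i j) $$ (r div dB', c div dB')
          * \<Psi> (munit dB k l) $$ (r mod dB', c mod dB'))"

text \<open>Maximal correlation. The maximum is taken as a supremum; 0 is included
  (all values are nonnegative), which fixes the value 0 when no admissible X, Y exist.\<close>
definition max_corr :: "nat \<Rightarrow> nat \<Rightarrow> complex mat \<Rightarrow> real" where
  "max_corr dA dB \<rho> = Sup (insert 0
     {cmod (mtrace (\<rho> * kron X (dagger Y))) | X Y.
        X \<in> carrier_mat dA dA \<and> Y \<in> carrier_mat dB dB \<and>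
        mtrace (ptrace_B dA dB \<rho> * X) = 0 \<and> mtrace (ptrace_A dA dB \<rho> * Y) = 0 \<and>
        mtrace (ptrace_B dA dB \<rho> * X * dagger X) = 1 \<and>
        mtrace (ptrace_A dA dB \<rho> * Y * dagger Y) = 1})"

definition decomposition :: "nat \<Rightarrow> nat \<Rightarrow> complex mat \<Rightarrow> (real \<times> complex mat) list \<Rightarrow> bool" where
  "decomposition dA dB \<rho> D \<longleftrightarrow> D \<noteq> [] \<and>
     (\<forall>(p, \<tau>) \<in> set D. p \<ge> 0 \<and> density (dA * dB) \<tau>) \<and>
     \<rho> = foldr (\<lambda>(p, \<tau>) acc. complex_of_real p \<cdot>\<^sub>m \<tau> + acc) D (0\<^sub>m (dA * dB) (dA * dB))"

definition max_ent :: "nat \<Rightarrow> nat \<Rightarrow> complex mat \<Rightarrow> real" where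
  "max_ent dA dB \<rho> = Inf {Max (set (map (\<lambda>(p, \<tau>). max_corr dA dB \<tau>) D)) | D.
      decomposition dA dB \<rho> D}"

end

theory Submission
  imports Defs
begin


lemma sum_prod_idx: "(\<Sum>r<a*b. f r) = (\<Sum>i<a. \<Sum>k<b. f (i*b+k::nat))"
proof (induction a)
  case 0 then show ?case by simp
next
  case (Suc a)
  have e: "{..<Suc a*b} = {..<a*b} \<union> {a*b..<a*b+b}" by auto
  have "(\<Sum>r<Suc a*b. f r) = (\<Sum>r<a*b. f r) + (\<Sum>r\<in>{a*b..<a*b+b}. f r)"
    unfolding e by (rule sum.union_disjoint) auto
  also have "(\<Sum>r\<in>{a*b..<a*b+b}. f r) = (\<Sum>k<b. f (a*b+k))"
  proof -
    have "(\<Sum>r\<in>{a*b..<a*b+b}. f r) = (\<Sum>k\<in>{0..<b}. f (k + a*b))"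
      using sum.shift_bounds_nat_ivl[of f 0 "a*b" b] by (simp add: add.commute)
    then show ?thesis by (simp add: lessThan_atLeast0 add.commute)
  qed
  finally show ?case using Suc by simp
qed

definition qf :: "nat \<Rightarrow> (nat \<Rightarrow> nat \<Rightarrow> complex) \<Rightarrow> (nat \<Rightarrow> complex) \<Rightarrow> complex" where
  "qf n f v = (\<Sum>i<n. \<Sum>j<n. cnj (v i) * f i j * v j)"

definition pf :: "nat \<Rightarrow> (nat \<Rightarrow> nat \<Rightarrow> complex) \<Rightarrow> bool" where
  "pf n f \<longleftrightarrow> (\<forall>v. Im (qf n f v) = 0 \<and> Re (qf n f v) \<ge> 0)"

lemma psd_pf: "psd n M \<Longrightarrow> pf n (\<lambda>i j. M $$ (i,j))"
  unfolding psd_def pf_def qf_def Let_def by auto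

lemma sum_delta_mult: "finite S \<Longrightarrow> (\<Sum>y\<in>S. g y * (if y = i then a else (0::'a::comm_ring_1))) = (if i \<in> S then g i * a else 0)"
proof -
  assume "finite S"
  have "(\<Sum>y\<in>S. g y * (if y = i then a else 0)) = (\<Sum>y\<in>S. if y = i then g i * a else 0)"
    by (rule sum.cong) auto
  then show ?thesis using \<open>finite S\<close> by simp
qed

lemma sum_two_pts:
  fixes g :: "nat \<Rightarrow> complex"
  assumes "i < n" "j < n" "i \<noteq> j"
  shows "(\<Sum>y<n. g y * ((if y = i then a else 0) + (if y = j then b else 0))) = g i * a + g j * b"
proof -
  have 1: "(\<Sum>y<n. g y * (if y = i then a else 0)) = g i * a"
    using sum_delta_mult[of "{..<n}" g i a] assms by simp
  have 2: "(\<Sum>y<n. g y * (if y = j then b else 0)) = g j * b"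
    using sum_delta_mult[of "{..<n}" g j b] assms by simp
  show ?thesis by (simp add: distrib_left sum.distrib 1 2)
qed

lemma qf_two:
  assumes "i < n" "j < n" "i \<noteq> j"
  shows "qf n f (\<lambda>y. (if y = i then a else 0) + (if y = j then b else 0)) =
     cnj a * a * f i i + cnj a * b * f i j + cnj b * a * f j i + cnj b * b * f j j"
proof -
  have "qf n f (\<lambda>y. (if y = i then a else 0) + (if y = j then b else 0)) =
    (\<Sum>x<n. ((if x = i then cnj a else 0) + (if x = j then cnj b else 0)) * (f x i * a + f x j * b))"
    unfolding qf_def
    by (rule sum.cong[OF refl]) (simp add: sum_distrib_left[symmetric] mult.assoc sum_two_pts[OF assms] if_distrib[where f=cnj] cong: if_cong)
  also have "\<dots> = (f i i * a + f i j * b) * cnj a + (f j i * a + f j j * b) * cnj b"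
    using sum_two_pts[OF assms, of "\<lambda>x. f x i * a + f x j * b" "cnj a" "cnj b"] by (simp add: mult.commute)
  finally show ?thesis by (simp add: algebra_simps)
qed

lemma qf_one:
  assumes "i < n"
  shows "qf n f (\<lambda>y. if y = i then a else 0) = cnj a * a * f i i"
proof -
  have "qf n f (\<lambda>y. if y = i then a else 0) = (\<Sum>x<n. (f x i * a) * (if x = i then cnj a else 0))"
    unfolding qf_def
    by (rule sum.cong[OF refl]) (simp add: sum_delta_mult assms if_distrib[where f=cnj] mult.commute cong: if_cong)
  also have "\<dots> = f i i * a * cnj a" using assms by (simp add: sum_delta_mult)
  finally show ?thesis by (simp add: algebra_simps)
qed


lemma pf_qf: "pf n f \<Longrightarrow> Im (qf n f v) = 0 \<and> Re (qf n f v) \<ge> 0"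
  unfolding pf_def by blast

lemma pf_diag: assumes "pf n f" "i < n" shows "Im (f i i) = 0" "Re (f i i) \<ge> 0"
  using pf_qf[OF assms(1), of "\<lambda>y. if y = i then 1 else 0"] qf_one[OF assms(2), of f 1] by auto

lemma pf_herm: assumes "pf n f" "i < n" "j < n" shows "f j i = cnj (f i j)"
proof (cases "i = j")
  case True then show ?thesis using pf_diag[OF assms(1,2)] by (simp add: complex_eq_iff)
next
  case False
  have d: "Im (f i i) = 0" "Im (f j j) = 0" using pf_diag assms by auto
  have 1: "Im (qf n f (\<lambda>y. (if y = i then 1 else 0) + (if y = j then 1 else 0))) = 0"
    using pf_qf[OF assms(1)] by blast
  have 2: "Im (qf n f (\<lambda>y. (if y = i then 1 else 0) + (if y = j then \<i> else 0))) = 0"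
    using pf_qf[OF assms(1)] by blast
  from 1 d have a: "Im (f i j) + Im (f j i) = 0" by (simp add: qf_two[OF assms(2,3) False])
  from 2 d have b: "Re (f i j) - Re (f j i) = 0" by (simp add: qf_two[OF assms(2,3) False])
  show ?thesis using a b by (simp add: complex_eq_iff)
qed


lemma pf_zero_row: assumes "pf n f" "k < n" "j < n" "f k k = 0" shows "f k j = 0"
proof (rule ccontr)
  assume c0: "f k j \<noteq> 0"
  then have kj: "k \<noteq> j" using assms by auto
  define c where "c = f k j"
  define N where "N = (Re c)^2 + (Im c)^2"
  have Np: "N > 0" using c0 unfolding N_def c_def by (simp add: complex_eq_iff sum_power2_gt_zero_iff)
  define s where "s = (\<bar>Re (f j j)\<bar> + 1) / (2 * N)"
  define t where "t = - complex_of_real s * c"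
  have h: "f j k = cnj c" using pf_herm[OF assms(1,2,3)] c_def by simp
  have "Re (qf n f (\<lambda>y. (if y = k then t else 0) + (if y = j then 1 else 0))) \<ge> 0"
    using pf_qf[OF assms(1)] by blast
  then have "Re (cnj t * c + t * cnj c + f j j) \<ge> 0"
    by (simp add: qf_two[OF assms(2,3) kj] assms(4) h c_def)
  then have "- 2 * s * N + Re (f j j) \<ge> 0"
    by (simp add: t_def N_def algebra_simps power2_eq_square)
  moreover have "2 * s * N = \<bar>Re (f j j)\<bar> + 1" using Np by (simp add: s_def)
  ultimately show False by linarith
qed

lemma pf_restrict: "pf (Suc n) f \<Longrightarrow> pf n f"
proof -
  assume a: "pf (Suc n) f"
  show "pf n f" unfolding pf_def
  proof
    fix v :: "nat \<Rightarrow> complex"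
    let ?v = "\<lambda>x. if x < n then v x else 0"
    have "qf (Suc n) f ?v = qf n f v" unfolding qf_def by (simp add: sum.lessThan_Suc)
    then show "Im (qf n f v) = 0 \<and> 0 \<le> Re (qf n f v)" using pf_qf[OF a, of ?v] by simp
  qed
qed


lemma pf_schur:
  assumes pf: "pf (Suc n) f" and cpos: "Re (f n n) > 0"
  shows "pf n (\<lambda>i j. f i j - f i n * f n j / f n n)"
  unfolding pf_def
proof
  fix v :: "nat \<Rightarrow> complex"
  define c where "c = f n n"
  have cI: "Im c = 0" using pf_diag[OF pf, of n] c_def by simp
  have cr: "c = complex_of_real (Re c)" using cI by (simp add: complex_eq_iff)
  have c0: "c \<noteq> 0" using cpos c_def by auto
  define S where "S = (\<Sum>j<n. f n j * v j)"
  define A where "A = (\<Sum>i<n. \<Sum>j<n. cnj (v i) * f i j * v j)"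
  define t where "t = - S / c"
  define v' where "v' = (\<lambda>x. if x < n then v x else t)"
  have B: "(\<Sum>i<n. cnj (v i) * f i n) = cnj S"
    unfolding S_def by (simp add: pf_herm[OF pf, of n] mult.commute)
  have "qf (Suc n) f v' = (\<Sum>i<n. (\<Sum>j<n. cnj (v i) * f i j * v j) + cnj (v i) * f i n * t)
      + ((\<Sum>j<n. cnj t * f n j * v j) + cnj t * f n n * t)"
    unfolding qf_def by (simp add: sum.lessThan_Suc v'_def)
  also have "\<dots> = A + (\<Sum>i<n. cnj (v i) * f i n) * t + cnj t * S + cnj t * c * t"
    by (simp add: A_def S_def c_def sum.distrib sum_distrib_left sum_distrib_right mult.assoc)
  also have "\<dots> = A - cnj S * S / c"
    unfolding B t_def using c0 cr
    by (simp add: field_simps)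
  also have "\<dots> = qf n (\<lambda>i j. f i j - f i n * f n j / f n n) v"
  proof -
    have "qf n (\<lambda>i j. f i j - f i n * f n j / f n n) v
        = A - (\<Sum>i<n. \<Sum>j<n. cnj (v i) * f i n * (f n j * v j) / c)"
      unfolding qf_def A_def c_def by (simp add: algebra_simps sum_subtractf)
    also have "(\<Sum>i<n. \<Sum>j<n. cnj (v i) * f i n * (f n j * v j) / c) = (\<Sum>i<n. cnj (v i) * f i n) * S / c"
      unfolding S_def by (simp add: sum_distrib_left sum_distrib_right sum_divide_distrib) (rule sum.swap)
    finally show ?thesis unfolding B by simp
  qed
  finally have e: "qf (Suc n) f v' = qf n (\<lambda>i j. f i j - f i n * f n j / f n n) v" .
  show "Im (qf n (\<lambda>i j. f i j - f i n * f n j / f n n) v) = 0 \<and>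
        0 \<le> Re (qf n (\<lambda>i j. f i j - f i n * f n j / f n n) v)"
    using pf_qf[OF pf, of v'] e by simp
qed



theorem pf_vd: "pf n f \<Longrightarrow> \<exists>w. \<forall>i<n. \<forall>j<n. f i j = (\<Sum>m<n. w m i * cnj (w m j))"
proof (induction n arbitrary: f)
  case 0 then show ?case by simp
next
  case (Suc n)
  have pfS: "pf (Suc n) f" by fact
  define c where "c = f n n"
  have cI: "Im c = 0" and cR: "Re c \<ge> 0" using pf_diag[OF pfS, of n] c_def by auto
  show ?case
  proof (cases "Re c = 0")
    case True
    then have c0: "f n n = 0" using cI c_def by (simp add: complex_eq_iff)
    have r1: "f n j = 0" if "j < Suc n" for j using pf_zero_row[OF pfS _ that c0] by simp
    have r2: "f j n = 0" if "j < Suc n" for j using pf_herm[OF pfS _ that, of n] r1[OF that] by simp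
    obtain w where w: "\<forall>i<n. \<forall>j<n. f i j = (\<Sum>m<n. w m i * cnj (w m j))"
      using Suc.IH[OF pf_restrict[OF pfS]] by blast
    define w' where "w' = (\<lambda>m i. if m < n \<and> i < n then w m i else 0)"
    show ?thesis
    proof (intro exI allI impI)
      fix i j assume i: "i < Suc n" and j: "j < Suc n"
      show "f i j = (\<Sum>m<Suc n. w' m i * cnj (w' m j))"
      proof (cases "i < n \<and> j < n")
        case True then show ?thesis using w by (simp add: sum.lessThan_Suc w'_def)
      next
        case False
        then have "i = n \<or> j = n" using i j by auto
        then have "f i j = 0" using r1 r2 i j by auto
        moreover have "(\<Sum>m<Suc n. w' m i * cnj (w' m j)) = 0"
          by (rule sum.neutral) (use False in \<open>auto simp: w'_def\<close>)
        ultimately show ?thesis by simp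
      qed
    qed
  next
    case False
    then have cpos: "Re (f n n) > 0" using cR c_def by simp
    have cr: "c = complex_of_real (Re c)" using cI by (simp add: complex_eq_iff)
    obtain w where w: "\<forall>i<n. \<forall>j<n. f i j - f i n * f n j / f n n = (\<Sum>m<n. w m i * cnj (w m j))"
      using Suc.IH[OF pf_schur[OF pfS cpos]] by blast
    define r where "r = complex_of_real (sqrt (Re c))"
    have rr1: "r * r = c"
    proof -
      have "r * r = complex_of_real (sqrt (Re c) * sqrt (Re c))" unfolding r_def by (simp only: of_real_mult)
      also have "\<dots> = complex_of_real (Re c)" using cR by simp
      finally show ?thesis using cr by simp
    qed
    have rr2: "cnj r = r" unfolding r_def by simp
    note rr = rr1 rr2
    have r0: "r \<noteq> 0" using rr c_def cpos by auto
    define w' where "w' = (\<lambda>m i. if m < n then (if i < n then w m i else 0) else f i n / r)"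
    have h: "f j n = cnj (f n j)" if "j < Suc n" for j using pf_herm[OF pfS _ that, of n] by simp
    show ?thesis
    proof (intro exI allI impI)
      fix i j assume i: "i < Suc n" and j: "j < Suc n"
      have e0: "w' n i * cnj (w' n j) = f i n * cnj (f j n) / c"
      proof -
        have "w' n i * cnj (w' n j) = f i n * cnj (f j n) / (r * cnj r)" by (simp add: w'_def)
        then show ?thesis using rr by simp
      qed
      have e: "(\<Sum>m<Suc n. w' m i * cnj (w' m j)) =
          (\<Sum>m<n. w' m i * cnj (w' m j)) + f i n * cnj (f j n) / c"
        by (simp add: e0)
      have cc: "cnj (f n n) = f n n" using cr c_def by (metis complex_cnj_complex_of_real)
      have c0: "f n n \<noteq> 0" using cpos by auto
      have ec: "c = f n n" by (simp add: c_def)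
      show "f i j = (\<Sum>m<Suc n. w' m i * cnj (w' m j))"
      proof (cases "i < n \<and> j < n")
        case True
        have "(\<Sum>m<n. w' m i * cnj (w' m j)) = (\<Sum>m<n. w m i * cnj (w m j))" using True by (simp add: w'_def)
        also have "\<dots> = f i j - f i n * f n j / f n n" using w True by simp
        finally show ?thesis unfolding e ec using h[OF j] by simp
      next
        case False
        then have "(\<Sum>m<n. w' m i * cnj (w' m j)) = 0" by (auto simp: w'_def)
        moreover have "f i j = f i n * cnj (f j n) / c"
        proof -
          consider "i = n" "j = n" | "i = n" "j < n" | "i < n" "j = n" using False i j by linarith
          then show ?thesis
          proof cases
            case 1 then show ?thesis unfolding ec using cc c0 by simp
          next
            case 2 then show ?thesis unfolding ec using cc c0 h[OF j] by simp
          next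
            case 3 then show ?thesis unfolding ec using cc c0 by simp
          qed
        qed
        ultimately show ?thesis unfolding e by simp
      qed
    qed
  qed
qed



lemma mtrace_mult:
  assumes "A \<in> carrier_mat n m" "B \<in> carrier_mat m n"
  shows "mtrace (A*B) = (\<Sum>i<n. \<Sum>c<m. A$$(i,c) * B$$(c,i))"
  using assms unfolding mtrace_def
  by (auto simp: scalar_prod_def atLeast0LessThan intro!: sum.cong)

lemma div_mod_idx:
  assumes "i < a" "k < (b::nat)"
  shows "i*b+k < a*b" "(i*b+k) div b = i" "(i*b+k) mod b = k"
proof -
  show "i*b+k < a*b"
  proof -
    have "i*b+k < i*b + b" using assms by simp
    also have "\<dots> = (Suc i)*b" by simp
    also have "\<dots> \<le> a*b" using assms by (intro mult_le_mono1) simp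
    finally show ?thesis .
  qed
  show "(i*b+k) div b = i" "(i*b+k) mod b = k" using assms by auto
qed

lemma idx_bound: "r < a*b \<Longrightarrow> r div b < (a::nat)" "r < a*b \<Longrightarrow> r mod b < (b::nat)"
  by (auto simp: less_mult_imp_div_less) (metis mod_less_divisor mult_zero_right not_less0 not_gr0 )

definition Omega :: "nat \<Rightarrow> complex mat" where
  "Omega d = mat (d*d) (d*d) (\<lambda>(r,c). if r div d = r mod d \<and> c div d = c mod d then 1 else 0)"

lemma psd_Omega: "psd (d*d) (Omega d)"
  unfolding psd_def Let_def
proof (intro conjI allI)
  show "Omega d \<in> carrier_mat (d*d) (d*d)" by (simp add: Omega_def)
  fix v :: "nat \<Rightarrow> complex"
  define s where "s = (\<Sum>r<d*d. if r div d = r mod d then v r else 0)"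
  have "(\<Sum>i<d*d. \<Sum>j<d*d. cnj (v i) * Omega d $$ (i, j) * v j)
      = (\<Sum>i<d*d. \<Sum>j<d*d. (if i div d = i mod d then cnj (v i) else 0) * (if j div d = j mod d then v j else 0))"
    by (intro sum.cong refl) (simp add: Omega_def)
  also have "\<dots> = (\<Sum>i<d*d. if i div d = i mod d then cnj (v i) else 0) * s"
    unfolding s_def by (simp add: sum_product)
  also have "(\<Sum>i<d*d. if i div d = i mod d then cnj (v i) else 0) = cnj s"
    unfolding s_def cnj_sum by (intro sum.cong) auto
  finally have e: "(\<Sum>i<d*d. \<Sum>j<d*d. cnj (v i) * Omega d $$ (i, j) * v j) = cnj s * s" .
  show "Im (\<Sum>i<d*d. \<Sum>j<d*d. cnj (v i) * Omega d $$ (i, j) * v j) = 0" unfolding e by simp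
  show "0 \<le> Re (\<Sum>i<d*d. \<Sum>j<d*d. cnj (v i) * Omega d $$ (i, j) * v j)" unfolding e by simp
qed

lemma choi_entry:
  assumes "r < d*d'" "c < d*d'"
  shows "ampl d d' d \<Phi> (Omega d) $$ (r,c) = \<Phi> (munit d (r div d') (c div d')) $$ (r mod d', c mod d')"
proof -
  have rb: "r div d' < d" "c div d' < d" using assms by (auto simp: less_mult_imp_div_less mult.commute)
  have "mat d d (\<lambda>(i, j). Omega d $$ ((r div d') * d + i, (c div d') * d + j)) = munit d (r div d') (c div d')"
    unfolding munit_def
  proof (rule eq_matI)
    fix i j assume "i < dim_row (mat d d (\<lambda>(a, b). if a = r div d' \<and> b = c div d' then 1 else (0::complex)))"
      "j < dim_col (mat d d (\<lambda>(a, b). if a = r div d' \<and> b = c div d' then 1 else (0::complex)))"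
    then have ij: "i < d" "j < d" by auto
    show "mat d d (\<lambda>(i, j). Omega d $$ ((r div d') * d + i, (c div d') * d + j)) $$ (i, j) =
          mat d d (\<lambda>(a, b). if a = r div d' \<and> b = c div d' then 1 else 0) $$ (i, j)"
      using ij rb div_mod_idx[OF rb(1) ij(1)] div_mod_idx[OF rb(2) ij(2)]
      by (auto simp: Omega_def)
  qed auto
  then show ?thesis unfolding ampl_def using assms by (simp add: mult.commute)
qed

lemma kraus:
  assumes "cptp d d' \<Phi>"
  shows "\<exists>K. \<forall>p<d. \<forall>q<d. \<forall>a<d'. \<forall>b<d'.
           \<Phi> (munit d p q) $$ (a,b) = (\<Sum>m<d*d'. K m a p * cnj (K m b q))"
proof -
  have "psd (d*d') (ampl d d' d \<Phi> (Omega d))"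
    using assms psd_Omega unfolding cptp_def completely_positive_def by blast
  from pf_vd[OF psd_pf[OF this]] obtain w where
    w: "\<forall>i<d*d'. \<forall>j<d*d'. ampl d d' d \<Phi> (Omega d) $$ (i,j) = (\<Sum>m<d*d'. w m i * cnj (w m j))" by blast
  show ?thesis
  proof (intro exI allI impI)
    fix p q a b assume p: "p < d" and q: "q < d" and a: "a < d'" and b: "b < d'"
    have r: "p*d'+a < d*d'" "(p*d'+a) div d' = p" "(p*d'+a) mod d' = a" using div_mod_idx[OF p a] by (auto simp: mult.commute)
    have c: "q*d'+b < d*d'" "(q*d'+b) div d' = q" "(q*d'+b) mod d' = b" using div_mod_idx[OF q b] by (auto simp: mult.commute)
    show "\<Phi> (munit d p q) $$ (a,b) = (\<Sum>m<d*d'. (\<lambda>m a p. w m (p*d'+a)) m a p * cnj ((\<lambda>m a p. w m (p*d'+a)) m b q))"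
      using choi_entry[OF r(1) c(1), of \<Phi>] w r c by simp
  qed
qed

lemma munit_carrier: "munit d p q \<in> carrier_mat d d" by (simp add: munit_def)

lemma mtrace_munit: "p < d \<Longrightarrow> q < d \<Longrightarrow> mtrace (munit d p q) = (if p = q then 1 else 0)"
  unfolding mtrace_def munit_def by (cases "p = q") (auto intro: sum.neutral)

lemma tp_munit:
  assumes "cptp d d' \<Phi>" "p < d" "q < d"
  shows "(\<Sum>a<d'. \<Phi> (munit d p q) $$ (a,a)) = (if p = q then 1 else 0)"
proof -
  have c: "\<Phi> (munit d p q) \<in> carrier_mat d' d'" using assms munit_carrier unfolding cptp_def lin_map_def by blast
  have "mtrace (\<Phi> (munit d p q)) = mtrace (munit d p q)" using assms munit_carrier unfolding cptp_def trace_preserving_def by blast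
  then show ?thesis using c mtrace_munit[OF assms(2,3)] unfolding mtrace_def by simp
qed

lemma phi_carrier: "cptp d d' \<Phi> \<Longrightarrow> \<Phi> (munit d p q) \<in> carrier_mat d' d'"
  using munit_carrier unfolding cptp_def lin_map_def by blast



definition cT :: "nat \<Rightarrow> nat \<Rightarrow> complex mat \<Rightarrow> complex mat \<Rightarrow> complex mat \<Rightarrow> complex" where
  "cT dA dB \<rho> X Y = (\<Sum>i<dA. \<Sum>k<dB. \<Sum>j<dA. \<Sum>l<dB. \<rho>$$(i*dB+k, j*dB+l) * (X$$(j,i) * cnj (Y$$(k,l))))"

definition rA :: "nat \<Rightarrow> complex mat \<Rightarrow> nat \<Rightarrow> nat \<Rightarrow> complex" where
  "rA dB \<rho> i j = (\<Sum>k<dB. \<rho>$$(i*dB+k, j*dB+k))"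

definition rB :: "nat \<Rightarrow> nat \<Rightarrow> complex mat \<Rightarrow> nat \<Rightarrow> nat \<Rightarrow> complex" where
  "rB dA dB \<rho> k l = (\<Sum>i<dA. \<rho>$$(i*dB+k, i*dB+l))"

definition mT :: "nat \<Rightarrow> (nat \<Rightarrow> nat \<Rightarrow> complex) \<Rightarrow> complex mat \<Rightarrow> complex" where
  "mT d R X = (\<Sum>i<d. \<Sum>j<d. R i j * X$$(j,i))"

definition nT :: "nat \<Rightarrow> (nat \<Rightarrow> nat \<Rightarrow> complex) \<Rightarrow> complex mat \<Rightarrow> complex" where
  "nT d R X = (\<Sum>i<d. \<Sum>j<d. R i j * (\<Sum>t<d. X$$(j,t) * cnj (X$$(i,t))))"

lemma mult_entry:
  assumes "A \<in> carrier_mat n m" "B \<in> carrier_mat m p" "i < n" "j < p"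
  shows "(A*B)$$(i,j) = (\<Sum>c<m. A$$(i,c) * B$$(c,j))"
  using assms by (simp add: scalar_prod_def atLeast0LessThan)

lemma dagger_carrier: "Y \<in> carrier_mat n m \<Longrightarrow> dagger Y \<in> carrier_mat m n"
  unfolding dagger_def by simp

lemma dagger_entry: "Y \<in> carrier_mat n m \<Longrightarrow> i < m \<Longrightarrow> j < n \<Longrightarrow> dagger Y $$ (i,j) = cnj (Y $$ (j,i))"
  unfolding dagger_def by simp

lemma kron_carrier: "X \<in> carrier_mat a a \<Longrightarrow> Y \<in> carrier_mat b b \<Longrightarrow> kron X Y \<in> carrier_mat (a*b) (a*b)"
  unfolding kron_def by simp

lemma link_corr:
  assumes r: "\<rho> \<in> carrier_mat (dA*dB) (dA*dB)" and X: "X \<in> carrier_mat dA dA" and Y: "Y \<in> carrier_mat dB dB"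
  shows "mtrace (\<rho> * kron X (dagger Y)) = cT dA dB \<rho> X Y"
proof -
  have K: "kron X (dagger Y) \<in> carrier_mat (dA*dB) (dA*dB)" using kron_carrier[OF X dagger_carrier[OF Y]] .
  have "mtrace (\<rho> * kron X (dagger Y)) = (\<Sum>r<dA*dB. \<Sum>c<dA*dB. \<rho>$$(r,c) * kron X (dagger Y) $$ (c,r))"
    by (rule mtrace_mult[OF r K])
  also have "\<dots> = (\<Sum>i<dA. \<Sum>k<dB. \<Sum>j<dA. \<Sum>l<dB. \<rho>$$(i*dB+k, j*dB+l) * kron X (dagger Y) $$ (j*dB+l, i*dB+k))"
    by (simp add: sum_prod_idx)
  also have "\<dots> = cT dA dB \<rho> X Y"
    unfolding cT_def
    by (intro sum.cong refl) (use X Y in \<open>simp add: kron_def div_mod_idx dagger_def\<close>)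
  finally show ?thesis .
qed

lemma ptrace_B_carrier: "ptrace_B dA dB \<rho> \<in> carrier_mat dA dA" unfolding ptrace_B_def by simp
lemma ptrace_A_carrier: "ptrace_A dA dB \<rho> \<in> carrier_mat dB dB" unfolding ptrace_A_def by simp

lemma link_mA:
  assumes X: "X \<in> carrier_mat dA dA"
  shows "mtrace (ptrace_B dA dB \<rho> * X) = mT dA (rA dB \<rho>) X"
  unfolding mtrace_mult[OF ptrace_B_carrier X] mT_def
  by (intro sum.cong refl) (simp add: ptrace_B_def rA_def)

lemma link_mB:
  assumes Y: "Y \<in> carrier_mat dB dB"
  shows "mtrace (ptrace_A dA dB \<rho> * Y) = mT dB (rB dA dB \<rho>) Y"
  unfolding mtrace_mult[OF ptrace_A_carrier Y] mT_def
  by (intro sum.cong refl) (simp add: ptrace_A_def rB_def)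

lemma nT_alt:
  assumes X: "X \<in> carrier_mat d d" and P: "P \<in> carrier_mat d d"
  shows "mtrace (P * X * dagger X) = nT d (\<lambda>i j. P$$(i,j)) X"
proof -
  have PX: "P * X \<in> carrier_mat d d" using P X by simp
  have "mtrace (P * X * dagger X) = (\<Sum>i<d. \<Sum>c<d. (P*X)$$(i,c) * dagger X $$ (c,i))"
    by (rule mtrace_mult[OF PX dagger_carrier[OF X]])
  also have "\<dots> = (\<Sum>i<d. \<Sum>c<d. (\<Sum>j<d. P$$(i,j) * X$$(j,c)) * cnj (X $$ (i,c)))"
    by (intro sum.cong refl) (simp add: mult_entry[OF P X] dagger_entry[OF X])
  also have "\<dots> = nT d (\<lambda>i j. P$$(i,j)) X"
    unfolding nT_def
    by (simp add: sum_distrib_left sum_distrib_right mult.assoc) (rule sum.cong[OF refl], rule sum.swap)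
  finally show ?thesis .
qed

lemma link_nA:
  assumes X: "X \<in> carrier_mat dA dA"
  shows "mtrace (ptrace_B dA dB \<rho> * X * dagger X) = nT dA (rA dB \<rho>) X"
proof -
  have "nT dA (\<lambda>i j. ptrace_B dA dB \<rho> $$ (i,j)) X = nT dA (rA dB \<rho>) X"
    unfolding nT_def by (intro sum.cong refl) (simp add: ptrace_B_def rA_def)
  then show ?thesis using nT_alt[OF X ptrace_B_carrier] by simp
qed

lemma link_nB:
  assumes Y: "Y \<in> carrier_mat dB dB"
  shows "mtrace (ptrace_A dA dB \<rho> * Y * dagger Y) = nT dB (rB dA dB \<rho>) Y"
proof -
  have "nT dB (\<lambda>i j. ptrace_A dA dB \<rho> $$ (i,j)) Y = nT dB (rB dA dB \<rho>) Y"
    unfolding nT_def by (intro sum.cong refl) (simp add: ptrace_A_def rB_def)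
  then show ?thesis using nT_alt[OF Y ptrace_A_carrier] by simp
qed



lemma tm_entry:
  assumes "a < dA'" "b < dB'" "a' < dA'" "b' < dB'"
  shows "tensor_map dA dB dA' dB' \<Phi> \<Psi> \<rho> $$ (a*dB'+b, a'*dB'+b') =
    (\<Sum>i<dA. \<Sum>j<dA. \<Sum>k<dB. \<Sum>l<dB. \<rho>$$(i*dB+k, j*dB+l) * \<Phi> (munit dA i j) $$ (a,a') * \<Psi> (munit dB k l) $$ (b,b'))"
  unfolding tensor_map_def using assms div_mod_idx[OF assms(1,2)] div_mod_idx[OF assms(3,4)] by simp

lemma tm_carrier: "tensor_map dA dB dA' dB' \<Phi> \<Psi> \<rho> \<in> carrier_mat (dA'*dB') (dA'*dB')"
  unfolding tensor_map_def by simp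

lemma tm_func:
  "(\<Sum>a<dA'. \<Sum>b<dB'. \<Sum>a'<dA'. \<Sum>b'<dB'. tensor_map dA dB dA' dB' \<Phi> \<Psi> \<rho> $$ (a*dB'+b, a'*dB'+b') * F a b a' b')
   = (\<Sum>i<dA. \<Sum>k<dB. \<Sum>j<dA. \<Sum>l<dB. \<rho>$$(i*dB+k, j*dB+l) *
        (\<Sum>a<dA'. \<Sum>b<dB'. \<Sum>a'<dA'. \<Sum>b'<dB'. \<Phi> (munit dA i j) $$ (a,a') * \<Psi> (munit dB k l) $$ (b,b') * F a b a' b'))"
proof -
  have "(\<Sum>a<dA'. \<Sum>b<dB'. \<Sum>a'<dA'. \<Sum>b'<dB'. tensor_map dA dB dA' dB' \<Phi> \<Psi> \<rho> $$ (a*dB'+b, a'*dB'+b') * F a b a' b')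
     = (\<Sum>a<dA'. \<Sum>b<dB'. \<Sum>a'<dA'. \<Sum>b'<dB'. (\<Sum>i<dA. \<Sum>j<dA. \<Sum>k<dB. \<Sum>l<dB. \<rho>$$(i*dB+k, j*dB+l) * \<Phi> (munit dA i j) $$ (a,a') * \<Psi> (munit dB k l) $$ (b,b')) * F a b a' b')"
    by (intro sum.cong refl) (simp add: tm_entry)
  also have "\<dots> = (\<Sum>i<dA. \<Sum>k<dB. \<Sum>j<dA. \<Sum>l<dB. \<rho>$$(i*dB+k, j*dB+l) *
        (\<Sum>a<dA'. \<Sum>b<dB'. \<Sum>a'<dA'. \<Sum>b'<dB'. \<Phi> (munit dA i j) $$ (a,a') * \<Psi> (munit dB k l) $$ (b,b') * F a b a' b'))"
    apply (simp only: sum_distrib_left sum_distrib_right sum.cartesian_product)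
    apply (rule sum.reindex_bij_witness[where j="\<lambda>(a,b,a',b',i,j,k,l). (i,k,j,l,a,b,a',b')" and i="\<lambda>(i,k,j,l,a,b,a',b'). (a,b,a',b',i,j,k,l)"])
    apply (auto simp: mult_ac)
    done
  finally show ?thesis .
qed


lemma ifz1: "(if c then a else 0) * z = (if c then a * z else (0::'a::mult_zero))" by simp
lemma ifz2: "z * (if c then a else 0) = (if c then z * a else (0::'a::mult_zero))" by simp

lemma cptp_herm:
  assumes "cptp d d' \<Phi>" "p < d" "q < d" "a < d'" "b < d'"
  shows "cnj (\<Phi> (munit d p q) $$ (a,b)) = \<Phi> (munit d q p) $$ (b,a)"
proof -
  obtain K where K: "\<forall>p<d. \<forall>q<d. \<forall>a<d'. \<forall>b<d'.
           \<Phi> (munit d p q) $$ (a,b) = (\<Sum>m<d*d'. K m a p * cnj (K m b q))" using kraus[OF assms(1)] by blast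
  show ?thesis using K assms by (simp add: mult.commute)
qed

definition adj :: "nat \<Rightarrow> nat \<Rightarrow> (complex mat \<Rightarrow> complex mat) \<Rightarrow> complex mat \<Rightarrow> complex mat" where
  "adj d d' \<Phi> X' = mat d d (\<lambda>(j,i). \<Sum>a<d'. \<Sum>a'<d'. \<Phi> (munit d i j) $$ (a,a') * X'$$(a',a))"

lemma adj_carrier: "adj d d' \<Phi> X' \<in> carrier_mat d d" unfolding adj_def by simp

lemma adj_entry: "j < d \<Longrightarrow> i < d \<Longrightarrow> adj d d' \<Phi> X' $$ (j,i) = (\<Sum>a<d'. \<Sum>a'<d'. \<Phi> (munit d i j) $$ (a,a') * X'$$(a',a))"
  unfolding adj_def by simp

lemma adj_cnj:
  assumes "cptp d d' \<Psi>" "k < d" "l < d"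
  shows "cnj (adj d d' \<Psi> Y' $$ (k,l)) = (\<Sum>b<d'. \<Sum>b'<d'. \<Psi> (munit d k l) $$ (b,b') * cnj (Y'$$(b,b')))"
proof -
  have "cnj (adj d d' \<Psi> Y' $$ (k,l)) = (\<Sum>a<d'. \<Sum>a'<d'. \<Psi> (munit d k l) $$ (a',a) * cnj (Y'$$(a',a)))"
    using assms by (simp add: adj_entry cnj_sum cptp_herm)
  also have "\<dots> = (\<Sum>b<d'. \<Sum>b'<d'. \<Psi> (munit d k l) $$ (b,b') * cnj (Y'$$(b,b')))"
    by (rule sum.swap)
  finally show ?thesis .
qed

lemma cT_tm:
  assumes "cptp dB dB' \<Psi>"
  shows "cT dA' dB' (tensor_map dA dB dA' dB' \<Phi> \<Psi> \<rho>) X' Y' = cT dA dB \<rho> (adj dA dA' \<Phi> X') (adj dB dB' \<Psi> Y')"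
proof -
  have "cT dA' dB' (tensor_map dA dB dA' dB' \<Phi> \<Psi> \<rho>) X' Y' =
    (\<Sum>i<dA. \<Sum>k<dB. \<Sum>j<dA. \<Sum>l<dB. \<rho>$$(i*dB+k, j*dB+l) *
        (\<Sum>a<dA'. \<Sum>b<dB'. \<Sum>a'<dA'. \<Sum>b'<dB'. \<Phi> (munit dA i j) $$ (a,a') * \<Psi> (munit dB k l) $$ (b,b') * (X'$$(a',a) * cnj (Y'$$(b,b')))))"
    unfolding cT_def by (rule tm_func)
  also have "\<dots> = cT dA dB \<rho> (adj dA dA' \<Phi> X') (adj dB dB' \<Psi> Y')"
    unfolding cT_def
  proof (intro sum.cong refl)
    fix i k j l assume i: "i \<in> {..<dA}" and k: "k \<in> {..<dB}" and j: "j \<in> {..<dA}" and l: "l \<in> {..<dB}"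
    have "(\<Sum>a<dA'. \<Sum>b<dB'. \<Sum>a'<dA'. \<Sum>b'<dB'. \<Phi> (munit dA i j) $$ (a,a') * \<Psi> (munit dB k l) $$ (b,b') * (X'$$(a',a) * cnj (Y'$$(b,b'))))
       = (\<Sum>a<dA'. \<Sum>a'<dA'. \<Phi> (munit dA i j) $$ (a,a') * X'$$(a',a)) * (\<Sum>b<dB'. \<Sum>b'<dB'. \<Psi> (munit dB k l) $$ (b,b') * cnj (Y'$$(b,b')))"
      apply (simp only: sum_distrib_left sum_distrib_right sum.cartesian_product)
      apply (rule sum.reindex_bij_witness[where j="\<lambda>(a,b,a',b'). ((b,b'),(a,a'))" and i="\<lambda>((b,b'),(a,a')). (a,b,a',b')"])
      apply (auto simp: mult_ac)
      done
    also have "\<dots> = adj dA dA' \<Phi> X' $$ (j,i) * cnj (adj dB dB' \<Psi> Y' $$ (k,l))"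
      using i j k l by (simp add: adj_entry[where \<Phi>=\<Phi>] adj_cnj[OF assms])
    finally show "\<rho>$$(i*dB+k, j*dB+l) * (\<Sum>a<dA'. \<Sum>b<dB'. \<Sum>a'<dA'. \<Sum>b'<dB'. \<Phi> (munit dA i j) $$ (a,a') * \<Psi> (munit dB k l) $$ (b,b') * (X'$$(a',a) * cnj (Y'$$(b,b'))))
       = \<rho>$$(i*dB+k, j*dB+l) * (adj dA dA' \<Phi> X' $$ (j,i) * cnj (adj dB dB' \<Psi> Y' $$ (k,l)))" by simp
  qed
  finally show ?thesis .
qed

lemma rA_tm:
  assumes "cptp dB dB' \<Psi>" "a < dA'" "a' < dA'"
  shows "rA dB' (tensor_map dA dB dA' dB' \<Phi> \<Psi> \<rho>) a a' = (\<Sum>i<dA. \<Sum>j<dA. rA dB \<rho> i j * \<Phi> (munit dA i j) $$ (a,a'))"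
proof -
  have "rA dB' (tensor_map dA dB dA' dB' \<Phi> \<Psi> \<rho>) a a' =
     (\<Sum>b<dB'. \<Sum>i<dA. \<Sum>j<dA. \<Sum>k<dB. \<Sum>l<dB. \<rho>$$(i*dB+k, j*dB+l) * \<Phi> (munit dA i j) $$ (a,a') * \<Psi> (munit dB k l) $$ (b,b))"
    unfolding rA_def using assms by (intro sum.cong refl) (simp add: tm_entry)
  also have "\<dots> = (\<Sum>i<dA. \<Sum>j<dA. \<Sum>k<dB. \<Sum>l<dB. \<rho>$$(i*dB+k, j*dB+l) * \<Phi> (munit dA i j) $$ (a,a') * (\<Sum>b<dB'. \<Psi> (munit dB k l) $$ (b,b)))"
    apply (simp only: sum_distrib_left sum.cartesian_product)
    apply (rule sum.reindex_bij_witness[where j="\<lambda>(b,i,j,k,l). (i,j,k,l,b)" and i="\<lambda>(i,j,k,l,b). (b,i,j,k,l)"])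
    apply (auto simp: mult_ac)
    done
  also have "\<dots> = (\<Sum>i<dA. \<Sum>j<dA. \<Sum>k<dB. \<Sum>l<dB. \<rho>$$(i*dB+k, j*dB+l) * \<Phi> (munit dA i j) $$ (a,a') * (if k = l then 1 else 0))"
    using assms(1) by (intro sum.cong refl) (simp add: tp_munit)
  also have "\<dots> = (\<Sum>i<dA. \<Sum>j<dA. rA dB \<rho> i j * \<Phi> (munit dA i j) $$ (a,a'))"
    unfolding rA_def by (intro sum.cong refl) (simp add: sum_distrib_right ifz1 ifz2)
  finally show ?thesis .
qed

lemma rB_tm:
  assumes "cptp dA dA' \<Phi>" "b < dB'" "b' < dB'"
  shows "rB dA' dB' (tensor_map dA dB dA' dB' \<Phi> \<Psi> \<rho>) b b' = (\<Sum>k<dB. \<Sum>l<dB. rB dA dB \<rho> k l * \<Psi> (munit dB k l) $$ (b,b'))"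
proof -
  have "rB dA' dB' (tensor_map dA dB dA' dB' \<Phi> \<Psi> \<rho>) b b' =
     (\<Sum>a<dA'. \<Sum>i<dA. \<Sum>j<dA. \<Sum>k<dB. \<Sum>l<dB. \<rho>$$(i*dB+k, j*dB+l) * \<Phi> (munit dA i j) $$ (a,a) * \<Psi> (munit dB k l) $$ (b,b'))"
    unfolding rB_def using assms by (intro sum.cong refl) (simp add: tm_entry)
  also have "\<dots> = (\<Sum>k<dB. \<Sum>l<dB. \<Sum>i<dA. \<Sum>j<dA. \<rho>$$(i*dB+k, j*dB+l) * (\<Sum>a<dA'. \<Phi> (munit dA i j) $$ (a,a)) * \<Psi> (munit dB k l) $$ (b,b'))"
    apply (simp only: sum_distrib_left sum_distrib_right sum.cartesian_product)
    apply (rule sum.reindex_bij_witness[where j="\<lambda>(a,i,j,k,l). (k,l,i,j,a)" and i="\<lambda>(k,l,i,j,a). (a,i,j,k,l)"])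
    apply (auto simp: mult_ac)
    done
  also have "\<dots> = (\<Sum>k<dB. \<Sum>l<dB. \<Sum>i<dA. \<Sum>j<dA. \<rho>$$(i*dB+k, j*dB+l) * (if i = j then 1 else 0) * \<Psi> (munit dB k l) $$ (b,b'))"
    using assms(1) by (intro sum.cong refl) (simp add: tp_munit)
  also have "\<dots> = (\<Sum>k<dB. \<Sum>l<dB. rB dA dB \<rho> k l * \<Psi> (munit dB k l) $$ (b,b'))"
    unfolding rB_def by (intro sum.cong refl) (simp add: sum_distrib_right ifz1 ifz2)
  finally show ?thesis .
qed


lemma mT_tmA:
  assumes "cptp dB dB' \<Psi>"
  shows "mT dA' (rA dB' (tensor_map dA dB dA' dB' \<Phi> \<Psi> \<rho>)) X' = mT dA (rA dB \<rho>) (adj dA dA' \<Phi> X')"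
proof -
  have "mT dA' (rA dB' (tensor_map dA dB dA' dB' \<Phi> \<Psi> \<rho>)) X' =
    (\<Sum>a<dA'. \<Sum>a'<dA'. (\<Sum>i<dA. \<Sum>j<dA. rA dB \<rho> i j * \<Phi> (munit dA i j) $$ (a,a')) * X'$$(a',a))"
    unfolding mT_def using assms by (intro sum.cong refl) (simp add: rA_tm)
  also have "\<dots> = (\<Sum>i<dA. \<Sum>j<dA. rA dB \<rho> i j * (\<Sum>a<dA'. \<Sum>a'<dA'. \<Phi> (munit dA i j) $$ (a,a') * X'$$(a',a)))"
    apply (simp only: sum_distrib_left sum_distrib_right sum.cartesian_product)
    apply (rule sum.reindex_bij_witness[where j="\<lambda>(a,a',i,j). (i,j,a,a')" and i="\<lambda>(i,j,a,a'). (a,a',i,j)"])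
    apply (auto simp: mult_ac)
    done
  also have "\<dots> = mT dA (rA dB \<rho>) (adj dA dA' \<Phi> X')"
    unfolding mT_def by (intro sum.cong refl) (simp add: adj_entry)
  finally show ?thesis .
qed

lemma mT_tmB:
  assumes "cptp dA dA' \<Phi>"
  shows "mT dB' (rB dA' dB' (tensor_map dA dB dA' dB' \<Phi> \<Psi> \<rho>)) Y' = mT dB (rB dA dB \<rho>) (adj dB dB' \<Psi> Y')"
proof -
  have "mT dB' (rB dA' dB' (tensor_map dA dB dA' dB' \<Phi> \<Psi> \<rho>)) Y' =
    (\<Sum>a<dB'. \<Sum>a'<dB'. (\<Sum>i<dB. \<Sum>j<dB. rB dA dB \<rho> i j * \<Psi> (munit dB i j) $$ (a,a')) * Y'$$(a',a))"
    unfolding mT_def using assms by (intro sum.cong refl) (simp add: rB_tm)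
  also have "\<dots> = (\<Sum>i<dB. \<Sum>j<dB. rB dA dB \<rho> i j * (\<Sum>a<dB'. \<Sum>a'<dB'. \<Psi> (munit dB i j) $$ (a,a') * Y'$$(a',a)))"
    apply (simp only: sum_distrib_left sum_distrib_right sum.cartesian_product)
    apply (rule sum.reindex_bij_witness[where j="\<lambda>(a,a',i,j). (i,j,a,a')" and i="\<lambda>(i,j,a,a'). (a,a',i,j)"])
    apply (auto simp: mult_ac)
    done
  also have "\<dots> = mT dB (rB dA dB \<rho>) (adj dB dB' \<Psi> Y')"
    unfolding mT_def by (intro sum.cong refl) (simp add: adj_entry)
  finally show ?thesis .
qed

lemma nT_mT:
  assumes X: "X \<in> carrier_mat d d"
  shows "nT d R X = mT d R (X * dagger X)"
  unfolding nT_def mT_def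
  by (intro sum.cong refl) (simp add: mult_entry[OF X dagger_carrier[OF X]] dagger_entry[OF X])



lemma real_cs:
  fixes u v :: "'a \<Rightarrow> real"
  assumes "finite S"
  shows "(\<Sum>x\<in>S. u x * v x)^2 \<le> (\<Sum>x\<in>S. (u x)^2) * (\<Sum>x\<in>S. (v x)^2)"
proof -
  have "0 \<le> (\<Sum>x\<in>S. \<Sum>y\<in>S. (u x * v y - u y * v x)^2)" by (intro sum_nonneg) auto
  also have "\<dots> = (\<Sum>x\<in>S. \<Sum>y\<in>S. (u x)^2 * (v y)^2) + (\<Sum>x\<in>S. \<Sum>y\<in>S. (u y)^2 * (v x)^2)
       - 2 * (\<Sum>x\<in>S. \<Sum>y\<in>S. (u x * v x) * (u y * v y))"
    by (simp add: power2_eq_square algebra_simps sum.distrib sum_subtractf sum_distrib_left)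
  also have "\<dots> = 2 * ((\<Sum>x\<in>S. (u x)^2) * (\<Sum>x\<in>S. (v x)^2)) - 2 * (\<Sum>x\<in>S. u x * v x)^2"
    by (simp add: sum_product power2_eq_square) (subst sum.swap, simp add: mult.commute)
  finally show ?thesis by simp
qed

lemma complex_cs:
  fixes a b :: "'a \<Rightarrow> complex"
  assumes "finite S"
  shows "(cmod (\<Sum>x\<in>S. a x * cnj (b x)))^2 \<le> (\<Sum>x\<in>S. (cmod (a x))^2) * (\<Sum>x\<in>S. (cmod (b x))^2)"
proof -
  have "cmod (\<Sum>x\<in>S. a x * cnj (b x)) \<le> (\<Sum>x\<in>S. cmod (a x) * cmod (b x))"
    by (rule order_trans[OF norm_sum]) (simp add: norm_mult)
  then have "(cmod (\<Sum>x\<in>S. a x * cnj (b x)))^2 \<le> (\<Sum>x\<in>S. cmod (a x) * cmod (b x))^2"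
    by (intro power_mono) auto
  also have "\<dots> \<le> (\<Sum>x\<in>S. (cmod (a x))^2) * (\<Sum>x\<in>S. (cmod (b x))^2)" by (rule real_cs[OF assms])
  finally show ?thesis .
qed

lemma complex_cs3:
  fixes a b :: "'a \<Rightarrow> 'b \<Rightarrow> 'c \<Rightarrow> complex"
  assumes "finite A" "finite B" "finite C"
  shows "(cmod (\<Sum>x\<in>A. \<Sum>y\<in>B. \<Sum>z\<in>C. a x y z * cnj (b x y z)))^2 \<le>
     (\<Sum>x\<in>A. \<Sum>y\<in>B. \<Sum>z\<in>C. (cmod (a x y z))^2) * (\<Sum>x\<in>A. \<Sum>y\<in>B. \<Sum>z\<in>C. (cmod (b x y z))^2)"
  using complex_cs[of "A \<times> B \<times> C" "\<lambda>(x,y,z). a x y z" "\<lambda>(x,y,z). b x y z"] assms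
  by (simp add: sum.cartesian_product case_prod_beta)

lemma sum_sq3: "(\<Sum>x\<in>A. \<Sum>y\<in>B. \<Sum>z\<in>C. a x y z * cnj (a x y z)) = complex_of_real (\<Sum>x\<in>A. \<Sum>y\<in>B. \<Sum>z\<in>C. (cmod (a x y z))^2)"
proof -
  have e: "b * cnj b = complex_of_real ((cmod b)^2)" for b using complex_norm_square[of b] by simp
  show ?thesis by (simp only: e of_real_sum)
qed

locale vdl =
  fixes dA dB :: nat and \<rho> :: "complex mat" and M :: "'m set" and w :: "'m \<Rightarrow> nat \<Rightarrow> complex"
  assumes finM: "finite M"
    and vd: "\<And>r c. r < dA*dB \<Longrightarrow> c < dA*dB \<Longrightarrow> \<rho>$$(r,c) = (\<Sum>m\<in>M. w m r * cnj (w m c))"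
begin

lemma vd2: "i < dA \<Longrightarrow> k < dB \<Longrightarrow> j < dA \<Longrightarrow> l < dB \<Longrightarrow>
   \<rho>$$(i*dB+k, j*dB+l) = (\<Sum>m\<in>M. w m (i*dB+k) * cnj (w m (j*dB+l)))"
  using vd div_mod_idx by simp

lemma id1: "cT dA dB \<rho> X Y = (\<Sum>m\<in>M. \<Sum>i<dA. \<Sum>l<dB.
    (\<Sum>j<dA. cnj (w m (j*dB+l)) * X$$(j,i)) * cnj (\<Sum>k<dB. cnj (w m (i*dB+k)) * Y$$(k,l)))"
proof -
  have "cT dA dB \<rho> X Y = (\<Sum>i<dA. \<Sum>k<dB. \<Sum>j<dA. \<Sum>l<dB. (\<Sum>m\<in>M. w m (i*dB+k) * cnj (w m (j*dB+l))) * (X$$(j,i) * cnj (Y$$(k,l))))"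
    unfolding cT_def by (intro sum.cong refl) (simp add: vd2)
  also have "\<dots> = (\<Sum>m\<in>M. \<Sum>i<dA. \<Sum>l<dB.
    (\<Sum>j<dA. cnj (w m (j*dB+l)) * X$$(j,i)) * cnj (\<Sum>k<dB. cnj (w m (i*dB+k)) * Y$$(k,l)))"
    apply (simp only: cnj_sum complex_cnj_mult complex_cnj_cnj sum_distrib_left sum_distrib_right)
    apply (simp only: sum.cartesian_product)
    apply (rule sum.reindex_bij_witness[where j="\<lambda>(i,k,j,l,m). (m,i,l,k,j)" and i="\<lambda>(m,i,l,k,j). (i,k,j,l,m)"])
    apply (auto simp: mult_ac)
    done
  finally show ?thesis .
qed

lemma id2: "nT dA (rA dB \<rho>) X = (\<Sum>m\<in>M. \<Sum>i<dA. \<Sum>l<dB.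
    (\<Sum>j<dA. cnj (w m (j*dB+l)) * X$$(j,i)) * cnj (\<Sum>j<dA. cnj (w m (j*dB+l)) * X$$(j,i)))"
proof -
  have "nT dA (rA dB \<rho>) X = (\<Sum>i<dA. \<Sum>j<dA. (\<Sum>k<dB. \<Sum>m\<in>M. w m (i*dB+k) * cnj (w m (j*dB+k))) * (\<Sum>t<dA. X$$(j,t) * cnj (X$$(i,t))))"
    unfolding nT_def rA_def by (intro sum.cong refl) (simp add: vd2)
  also have "\<dots> = (\<Sum>m\<in>M. \<Sum>i<dA. \<Sum>l<dB.
    (\<Sum>j<dA. cnj (w m (j*dB+l)) * X$$(j,i)) * cnj (\<Sum>j<dA. cnj (w m (j*dB+l)) * X$$(j,i)))"
    apply (simp only: cnj_sum complex_cnj_mult complex_cnj_cnj sum_distrib_left sum_distrib_right)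
    apply (simp only: sum.cartesian_product)
    apply (rule sum.reindex_bij_witness[where j="\<lambda>(i,j,t,k,m). (m,t,k,i,j)" and i="\<lambda>(m,t,k,i,j). (i,j,t,k,m)"])
    apply (auto simp: mult_ac)
    done
  finally show ?thesis .
qed

lemma id3: "nT dB (rB dA dB \<rho>) Y = (\<Sum>m\<in>M. \<Sum>i<dA. \<Sum>l<dB.
    (\<Sum>k<dB. cnj (w m (i*dB+k)) * Y$$(k,l)) * cnj (\<Sum>k<dB. cnj (w m (i*dB+k)) * Y$$(k,l)))"
proof -
  have "nT dB (rB dA dB \<rho>) Y = (\<Sum>k<dB. \<Sum>l<dB. (\<Sum>i<dA. \<Sum>m\<in>M. w m (i*dB+k) * cnj (w m (i*dB+l))) * (\<Sum>t<dB. Y$$(l,t) * cnj (Y$$(k,t))))"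
    unfolding nT_def rB_def by (intro sum.cong refl) (simp add: vd2)
  also have "\<dots> = (\<Sum>m\<in>M. \<Sum>i<dA. \<Sum>l<dB.
    (\<Sum>k<dB. cnj (w m (i*dB+k)) * Y$$(k,l)) * cnj (\<Sum>k<dB. cnj (w m (i*dB+k)) * Y$$(k,l)))"
    apply (simp only: cnj_sum complex_cnj_mult complex_cnj_cnj sum_distrib_left sum_distrib_right)
    apply (simp only: sum.cartesian_product)
    apply (rule sum.reindex_bij_witness[where j="\<lambda>(k,l,t,i,m). (m,i,t,k,l)" and i="\<lambda>(m,i,t,k,l). (k,l,t,i,m)"])
    apply (auto simp: mult_ac)
    done
  finally show ?thesis .
qed

lemma nA_real: "nT dA (rA dB \<rho>) X = complex_of_real (Re (nT dA (rA dB \<rho>) X))" "Re (nT dA (rA dB \<rho>) X) \<ge> 0"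
  unfolding id2 sum_sq3 by (simp_all add: sum_nonneg)

lemma nB_real: "nT dB (rB dA dB \<rho>) Y = complex_of_real (Re (nT dB (rB dA dB \<rho>) Y))" "Re (nT dB (rB dA dB \<rho>) Y) \<ge> 0"
  unfolding id3 sum_sq3 by (simp_all add: sum_nonneg)

lemma cs_main: "(cmod (cT dA dB \<rho> X Y))^2 \<le> Re (nT dA (rA dB \<rho>) X) * Re (nT dB (rB dA dB \<rho>) Y)"
  unfolding id1 id2 id3 sum_sq3 Re_complex_of_real
  by (rule complex_cs3) (simp_all add: finM)

end



lemma complex_cs2:
  fixes a b :: "'a \<Rightarrow> 'b \<Rightarrow> complex"
  assumes "finite A" "finite B"
  shows "(cmod (\<Sum>x\<in>A. \<Sum>y\<in>B. a x y * cnj (b x y)))^2 \<le>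
     (\<Sum>x\<in>A. \<Sum>y\<in>B. (cmod (a x y))^2) * (\<Sum>x\<in>A. \<Sum>y\<in>B. (cmod (b x y))^2)"
  using complex_cs[of "A \<times> B" "\<lambda>(x,y). a x y" "\<lambda>(x,y). b x y"] assms
  by (simp add: sum.cartesian_product case_prod_beta)

lemma sum_sq2: "(\<Sum>x\<in>A. \<Sum>y\<in>B. a x y * cnj (a x y)) = complex_of_real (\<Sum>x\<in>A. \<Sum>y\<in>B. (cmod (a x y))^2)"
proof -
  have e: "b * cnj b = complex_of_real ((cmod b)^2)" for b using complex_norm_square[of b] by simp
  show ?thesis by (simp only: e of_real_sum)
qed

lemma sum_sq1: "(\<Sum>x\<in>A. a x * cnj (a x)) = complex_of_real (\<Sum>x\<in>A. (cmod (a x))^2)"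
proof -
  have e: "b * cnj b = complex_of_real ((cmod b)^2)" for b using complex_norm_square[of b] by simp
  show ?thesis by (simp only: e of_real_sum)
qed

locale krs =
  fixes d d' :: nat and \<Phi> :: "complex mat \<Rightarrow> complex mat" and K :: "nat \<Rightarrow> nat \<Rightarrow> nat \<Rightarrow> complex"
  assumes kr: "\<And>p q a b. p < d \<Longrightarrow> q < d \<Longrightarrow> a < d' \<Longrightarrow> b < d' \<Longrightarrow>
      \<Phi> (munit d p q) $$ (a,b) = (\<Sum>n<d*d'. K n a p * cnj (K n b q))"
    and tp: "\<And>p q. p < d \<Longrightarrow> q < d \<Longrightarrow> (\<Sum>a<d'. \<Phi> (munit d p q) $$ (a,a)) = (if p = q then 1 else 0)"
begin

lemma tpK: "p < d \<Longrightarrow> q < d \<Longrightarrow> (\<Sum>n<d*d'. \<Sum>a<d'. K n a p * cnj (K n a q)) = (if p = q then 1 else 0)"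
proof -
  assume pq: "p < d" "q < d"
  have "(\<Sum>n<d*d'. \<Sum>a<d'. K n a p * cnj (K n a q)) = (\<Sum>a<d'. \<Phi> (munit d p q) $$ (a,a))"
    using pq by (simp add: kr) (rule sum.swap)
  then show ?thesis using tp[OF pq] by simp
qed

context
  fixes X' :: "complex mat" and v :: "nat \<Rightarrow> complex"
  assumes X': "X' \<in> carrier_mat d' d'"
begin

definition "uu t = (\<Sum>j<d. cnj (v j) * adj d d' \<Phi> X' $$ (j,t))"
definition "bb n a = (\<Sum>a'<d'. \<Sum>j<d. cnj (v j) * cnj (K n a' j) * X'$$(a',a))"
definition "dd n a = (\<Sum>t<d. cnj (K n a t) * uu t)"

lemma stepa: "(\<Sum>i<d. \<Sum>j<d. v i * cnj (v j) * (\<Sum>t<d. adj d d' \<Phi> X' $$ (j,t) * cnj (adj d d' \<Phi> X' $$ (i,t))))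
   = (\<Sum>t<d. uu t * cnj (uu t))"
  unfolding uu_def
  apply (simp only: cnj_sum complex_cnj_mult complex_cnj_cnj sum_distrib_left sum_distrib_right)
  apply (simp only: sum.cartesian_product)
  apply (rule sum.reindex_bij_witness[where j="\<lambda>(i,j,t). (t,i,j)" and i="\<lambda>(t,i,j). (i,j,t)"])
  apply (auto simp: mult_ac)
  done

lemma stepb: "t < d \<Longrightarrow> uu t = (\<Sum>n<d*d'. \<Sum>a<d'. K n a t * bb n a)"
proof -
  assume t: "t < d"
  have "uu t = (\<Sum>j<d. cnj (v j) * (\<Sum>a<d'. \<Sum>a'<d'. (\<Sum>n<d*d'. K n a t * cnj (K n a' j)) * X'$$(a',a)))"
    unfolding uu_def using t by (intro sum.cong refl) (simp add: adj_entry kr)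
  also have "\<dots> = (\<Sum>n<d*d'. \<Sum>a<d'. K n a t * bb n a)"
    unfolding bb_def
    apply (simp only: sum_distrib_left sum_distrib_right)
    apply (simp only: sum.cartesian_product)
    apply (rule sum.reindex_bij_witness[where j="\<lambda>(j,a,a',n). (n,a,a',j)" and i="\<lambda>(n,a,a',j). (j,a,a',n)"])
    apply (auto simp: mult_ac)
    done
  finally show ?thesis .
qed

lemma stepc: "(\<Sum>i<d. \<Sum>j<d. v i * cnj (v j) * adj d d' \<Phi> (X' * dagger X') $$ (j,i))
   = (\<Sum>n<d*d'. \<Sum>c<d'. bb n c * cnj (bb n c))"
proof -
  have XX: "X' * dagger X' \<in> carrier_mat d' d'" using X' dagger_carrier[OF X'] by simp
  have "(\<Sum>i<d. \<Sum>j<d. v i * cnj (v j) * adj d d' \<Phi> (X' * dagger X') $$ (j,i))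
    = (\<Sum>i<d. \<Sum>j<d. v i * cnj (v j) * (\<Sum>a<d'. \<Sum>a'<d'. (\<Sum>n<d*d'. K n a i * cnj (K n a' j)) * (\<Sum>c<d'. X'$$(a',c) * cnj (X'$$(a,c)))))"
    by (intro sum.cong refl) (simp add: adj_entry kr mult_entry[OF X' dagger_carrier[OF X']] dagger_entry[OF X'])
  also have "\<dots> = (\<Sum>n<d*d'. \<Sum>c<d'. bb n c * cnj (bb n c))"
    unfolding bb_def
    apply (simp only: cnj_sum complex_cnj_mult complex_cnj_cnj sum_distrib_left sum_distrib_right)
    apply (simp only: sum.cartesian_product)
    apply (rule sum.reindex_bij_witness[where j="\<lambda>(i,j,a,a',c,n). (n,c,a,i,a',j)" and i="\<lambda>(n,c,a,i,a',j). (i,j,a,a',c,n)"])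
    apply (auto simp: mult_ac)
    done
  finally show ?thesis .
qed

lemma stepd: "(\<Sum>n<d*d'. \<Sum>a<d'. bb n a * cnj (dd n a)) = (\<Sum>t<d. uu t * cnj (uu t))"
proof -
  have "(\<Sum>n<d*d'. \<Sum>a<d'. bb n a * cnj (dd n a)) = (\<Sum>t<d. (\<Sum>n<d*d'. \<Sum>a<d'. K n a t * bb n a) * cnj (uu t))"
    unfolding dd_def
    apply (simp only: cnj_sum complex_cnj_mult complex_cnj_cnj sum_distrib_left sum_distrib_right)
    apply (simp only: sum.cartesian_product)
    apply (rule sum.reindex_bij_witness[where j="\<lambda>(n,a,t). (t,n,a)" and i="\<lambda>(t,n,a). (n,a,t)"])
    apply (auto simp: mult_ac)
    done
  also have "\<dots> = (\<Sum>t<d. uu t * cnj (uu t))"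
    by (intro sum.cong refl) (simp add: stepb)
  finally show ?thesis .
qed

lemma stepe: "(\<Sum>n<d*d'. \<Sum>a<d'. dd n a * cnj (dd n a)) = (\<Sum>t<d. uu t * cnj (uu t))"
proof -
  have "(\<Sum>n<d*d'. \<Sum>a<d'. dd n a * cnj (dd n a)) = (\<Sum>t<d. \<Sum>t'<d. uu t * cnj (uu t') * (\<Sum>n<d*d'. \<Sum>a<d'. K n a t' * cnj (K n a t)))"
    unfolding dd_def
    apply (simp only: cnj_sum complex_cnj_mult complex_cnj_cnj sum_distrib_left sum_distrib_right)
    apply (simp only: sum.cartesian_product)
    apply (rule sum.reindex_bij_witness[where j="\<lambda>(n,a,t,t'). (t',t,n,a)" and i="\<lambda>(t',t,n,a). (n,a,t,t')"])
    apply (auto simp: mult_ac)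
    done
  also have "\<dots> = (\<Sum>t<d. \<Sum>t'<d. uu t * cnj (uu t') * (if t' = t then 1 else 0))"
    by (intro sum.cong refl) (simp add: tpK)
  also have "\<dots> = (\<Sum>t<d. uu t * cnj (uu t))"
    by (intro sum.cong refl) (simp add: ifz2)
  finally show ?thesis .
qed

lemma ks_vec: "Re (\<Sum>i<d. \<Sum>j<d. v i * cnj (v j) * (\<Sum>t<d. adj d d' \<Phi> X' $$ (j,t) * cnj (adj d d' \<Phi> X' $$ (i,t))))
   \<le> Re (\<Sum>i<d. \<Sum>j<d. v i * cnj (v j) * adj d d' \<Phi> (X' * dagger X') $$ (j,i))"
proof -
  define U where "U = (\<Sum>t<d. (cmod (uu t))^2)"
  define Bt where "Bt = (\<Sum>n<d*d'. \<Sum>c<d'. (cmod (bb n c))^2)"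
  define Dt where "Dt = (\<Sum>n<d*d'. \<Sum>c<d'. (cmod (dd n c))^2)"
  have L: "Re (\<Sum>i<d. \<Sum>j<d. v i * cnj (v j) * (\<Sum>t<d. adj d d' \<Phi> X' $$ (j,t) * cnj (adj d d' \<Phi> X' $$ (i,t)))) = U"
    unfolding stepa sum_sq1 U_def by simp
  have R: "Re (\<Sum>i<d. \<Sum>j<d. v i * cnj (v j) * adj d d' \<Phi> (X' * dagger X') $$ (j,i)) = Bt"
    unfolding stepc sum_sq2 Bt_def by simp
  have D: "Dt = U"
  proof -
    have "complex_of_real Dt = complex_of_real U" unfolding Dt_def U_def sum_sq2[symmetric] sum_sq1[symmetric] by (rule stepe)
    then show ?thesis by simp
  qed
  have C: "(cmod (\<Sum>n<d*d'. \<Sum>a<d'. bb n a * cnj (dd n a)))^2 \<le> Bt * Dt"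
    unfolding Bt_def Dt_def by (rule complex_cs2) auto
  have S: "(\<Sum>n<d*d'. \<Sum>a<d'. bb n a * cnj (dd n a)) = complex_of_real U" unfolding stepd sum_sq1 U_def ..
  have U0: "U \<ge> 0" "Bt \<ge> 0" unfolding U_def Bt_def by (simp_all add: sum_nonneg)
  have "(cmod (complex_of_real U))^2 \<le> Bt * U" using C unfolding S D .
  then have "U^2 \<le> Bt * U" using U0 by simp
  moreover note U0
  ultimately have "U \<le> Bt"
    by (metis mult_right_le_imp_le order_le_less power2_eq_square zero_le_mult_iff)
  then show ?thesis using L R by simp
qed

end

lemma ks_R:
  assumes X': "X' \<in> carrier_mat d' d'" and S: "finite S"
    and R: "\<And>i j. i < d \<Longrightarrow> j < d \<Longrightarrow> R i j = (\<Sum>s\<in>S. v s i * cnj (v s j))"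
  shows "Re (nT d R (adj d d' \<Phi> X')) \<le> Re (mT d R (adj d d' \<Phi> (X' * dagger X')))"
proof -
  have "nT d R (adj d d' \<Phi> X') = (\<Sum>s\<in>S. \<Sum>i<d. \<Sum>j<d. v s i * cnj (v s j) * (\<Sum>t<d. adj d d' \<Phi> X' $$ (j,t) * cnj (adj d d' \<Phi> X' $$ (i,t))))"
  proof -
    have "nT d R (adj d d' \<Phi> X') = (\<Sum>i<d. \<Sum>j<d. \<Sum>s\<in>S. v s i * cnj (v s j) * (\<Sum>t<d. adj d d' \<Phi> X' $$ (j,t) * cnj (adj d d' \<Phi> X' $$ (i,t))))"
      unfolding nT_def by (intro sum.cong refl) (simp add: R sum_distrib_right)
    also have "\<dots> = (\<Sum>s\<in>S. \<Sum>i<d. \<Sum>j<d. v s i * cnj (v s j) * (\<Sum>t<d. adj d d' \<Phi> X' $$ (j,t) * cnj (adj d d' \<Phi> X' $$ (i,t))))"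
      apply (simp only: sum.cartesian_product)
      apply (rule sum.reindex_bij_witness[where j="\<lambda>(i,j,s). (s,i,j)" and i="\<lambda>(s,i,j). (i,j,s)"])
      apply auto
      done
    finally show ?thesis .
  qed
  moreover have "mT d R (adj d d' \<Phi> (X' * dagger X')) = (\<Sum>s\<in>S. \<Sum>i<d. \<Sum>j<d. v s i * cnj (v s j) * adj d d' \<Phi> (X' * dagger X') $$ (j,i))"
  proof -
    have "mT d R (adj d d' \<Phi> (X' * dagger X')) = (\<Sum>i<d. \<Sum>j<d. \<Sum>s\<in>S. v s i * cnj (v s j) * adj d d' \<Phi> (X' * dagger X') $$ (j,i))"
      unfolding mT_def by (intro sum.cong refl) (simp add: R sum_distrib_right)
    also have "\<dots> = (\<Sum>s\<in>S. \<Sum>i<d. \<Sum>j<d. v s i * cnj (v s j) * adj d d' \<Phi> (X' * dagger X') $$ (j,i))"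
      apply (simp only: sum.cartesian_product)
      apply (rule sum.reindex_bij_witness[where j="\<lambda>(i,j,s). (s,i,j)" and i="\<lambda>(s,i,j). (i,j,s)"])
      apply auto
      done
    finally show ?thesis .
  qed
  moreover have "(\<Sum>s\<in>S. Re (\<Sum>i<d. \<Sum>j<d. v s i * cnj (v s j) * (\<Sum>t<d. adj d d' \<Phi> X' $$ (j,t) * cnj (adj d d' \<Phi> X' $$ (i,t)))))
     \<le> (\<Sum>s\<in>S. Re (\<Sum>i<d. \<Sum>j<d. v s i * cnj (v s j) * adj d d' \<Phi> (X' * dagger X') $$ (j,i)))"
    by (intro sum_mono ks_vec[OF X'])
  ultimately show ?thesis by (simp only: Re_sum[symmetric])
qed

end



lemma vd_of_density:
  assumes "density (dA*dB) \<tau>"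
  shows "\<exists>w. vdl dA dB \<tau> {..<dA*dB} w"
proof -
  have "psd (dA*dB) \<tau>" using assms unfolding density_def by simp
  from pf_vd[OF psd_pf[OF this]] obtain w where
    w: "\<forall>i<dA*dB. \<forall>j<dA*dB. \<tau> $$ (i,j) = (\<Sum>m<dA*dB. w m i * cnj (w m j))" by blast
  have "vdl dA dB \<tau> {..<dA*dB} w" by unfold_locales (use w in auto)
  then show ?thesis by blast
qed

lemma density_carrier: "density n \<tau> \<Longrightarrow> \<tau> \<in> carrier_mat n n"
  unfolding density_def psd_def by simp

lemma mT_smult: "X \<in> carrier_mat d d \<Longrightarrow> mT d R (c \<cdot>\<^sub>m X) = c * mT d R X"
  unfolding mT_def by (simp add: sum_distrib_left mult_ac)

lemma nT_smult: "X \<in> carrier_mat d d \<Longrightarrow> nT d R (c \<cdot>\<^sub>m X) = (c * cnj c) * nT d R X"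
  unfolding nT_def by (simp add: sum_distrib_left mult_ac)

lemma cT_smult: "X \<in> carrier_mat dA dA \<Longrightarrow> Y \<in> carrier_mat dB dB \<Longrightarrow>
   cT dA dB \<tau> (c \<cdot>\<^sub>m X) (e \<cdot>\<^sub>m Y) = (c * cnj e) * cT dA dB \<tau> X Y"
  unfolding cT_def by (simp add: sum_distrib_left mult_ac)

context vdl
begin

lemma rA_vd: "i < dA \<Longrightarrow> j < dA \<Longrightarrow> rA dB \<rho> i j =
   (\<Sum>s\<in>M \<times> {..<dB}. (\<lambda>s i. w (fst s) (i*dB + snd s)) s i * cnj ((\<lambda>s i. w (fst s) (i*dB + snd s)) s j))"
  unfolding rA_def by (simp add: vd2) (subst sum.swap, simp add: sum.cartesian_product case_prod_beta)

lemma rB_vd: "k < dB \<Longrightarrow> l < dB \<Longrightarrow> rB dA dB \<rho> k l =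
   (\<Sum>s\<in>M \<times> {..<dA}. (\<lambda>s k. w (fst s) (snd s*dB + k)) s k * cnj ((\<lambda>s k. w (fst s) (snd s*dB + k)) s l))"
  unfolding rB_def by (simp add: vd2) (subst sum.swap, simp add: sum.cartesian_product case_prod_beta)

lemma elem_bound:
  assumes X: "X \<in> carrier_mat dA dA" and Y: "Y \<in> carrier_mat dB dB"
    and nx: "nT dA (rA dB \<rho>) X = 1" and ny: "nT dB (rB dA dB \<rho>) Y = 1"
  shows "cmod (cT dA dB \<rho> X Y) \<le> 1"
proof -
  have "(cmod (cT dA dB \<rho> X Y))^2 \<le> 1" using cs_main[of X Y] nx ny by simp
  then show ?thesis by (simp add: power_le_one_iff abs_le_iff power2_le_iff_abs_le)
qed

end

definition mcset :: "nat \<Rightarrow> nat \<Rightarrow> complex mat \<Rightarrow> real set" where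
  "mcset dA dB \<rho> = {cmod (mtrace (\<rho> * kron X (dagger Y))) | X Y.
        X \<in> carrier_mat dA dA \<and> Y \<in> carrier_mat dB dB \<and>
        mtrace (ptrace_B dA dB \<rho> * X) = 0 \<and> mtrace (ptrace_A dA dB \<rho> * Y) = 0 \<and>
        mtrace (ptrace_B dA dB \<rho> * X * dagger X) = 1 \<and>
        mtrace (ptrace_A dA dB \<rho> * Y * dagger Y) = 1}"

lemma max_corr_mcset: "max_corr dA dB \<rho> = Sup (insert 0 (mcset dA dB \<rho>))"
  unfolding max_corr_def mcset_def ..

lemma mcset_bounded:
  assumes "density (dA*dB) \<tau>"
  shows "bdd_above (insert 0 (mcset dA dB \<tau>))"
proof -
  obtain w where V: "vdl dA dB \<tau> {..<dA*dB} w" using vd_of_density[OF assms] by blast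
  have C: "\<tau> \<in> carrier_mat (dA*dB) (dA*dB)" using density_carrier[OF assms] .
  have "\<forall>x\<in>insert 0 (mcset dA dB \<tau>). x \<le> 1"
  proof
    fix x assume "x \<in> insert 0 (mcset dA dB \<tau>)"
    then consider "x = 0" | "x \<in> mcset dA dB \<tau>" by blast
    then show "x \<le> 1"
    proof cases
      case 2
      then obtain X Y where X: "X \<in> carrier_mat dA dA" and Y: "Y \<in> carrier_mat dB dB"
        and nx: "mtrace (ptrace_B dA dB \<tau> * X * dagger X) = 1"
        and ny: "mtrace (ptrace_A dA dB \<tau> * Y * dagger Y) = 1"
        and x: "x = cmod (mtrace (\<tau> * kron X (dagger Y)))"
        unfolding mcset_def by blast
      show ?thesis using vdl.elem_bound[OF V X Y] nx ny x link_corr[OF C X Y] link_nA[OF X] link_nB[OF Y] by simp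
    qed simp
  qed
  then show ?thesis by (meson bdd_aboveI)
qed

lemma max_corr_nonneg: "density (dA*dB) \<tau> \<Longrightarrow> 0 \<le> max_corr dA dB \<tau>"
  unfolding max_corr_mcset by (rule cSup_upper[OF _ mcset_bounded]) auto

lemma max_corr_upper: "density (dA*dB) \<tau> \<Longrightarrow> x \<in> mcset dA dB \<tau> \<Longrightarrow> x \<le> max_corr dA dB \<tau>"
  unfolding max_corr_mcset by (rule cSup_upper[OF _ mcset_bounded]) auto



lemma krs_of_cptp:
  assumes "cptp d d' \<Phi>"
  shows "\<exists>K. krs d d' \<Phi> K"
proof -
  obtain K where K: "\<forall>p<d. \<forall>q<d. \<forall>a<d'. \<forall>b<d'.
           \<Phi> (munit d p q) $$ (a,b) = (\<Sum>m<d*d'. K m a p * cnj (K m b q))" using kraus[OF assms] by blast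
  have "krs d d' \<Phi> K" by unfold_locales (use K tp_munit[OF assms] in auto)
  then show ?thesis by blast
qed

lemma normalize_pair:
  assumes V: "vdl dA dB \<tau> M w" and dens: "density (dA*dB) \<tau>"
    and X: "X \<in> carrier_mat dA dA" and Y: "Y \<in> carrier_mat dB dB"
    and mX: "mT dA (rA dB \<tau>) X = 0" and mY: "mT dB (rB dA dB \<tau>) Y = 0"
    and a1: "Re (nT dA (rA dB \<tau>) X) \<le> 1" and b1: "Re (nT dB (rB dA dB \<tau>) Y) \<le> 1"
  shows "cmod (cT dA dB \<tau> X Y) \<le> max_corr dA dB \<tau>"
proof -
  interpret vdl dA dB \<tau> M w by fact
  have C: "\<tau> \<in> carrier_mat (dA*dB) (dA*dB)" using density_carrier[OF dens] .
  define a where "a = Re (nT dA (rA dB \<tau>) X)"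
  define b where "b = Re (nT dB (rB dA dB \<tau>) Y)"
  have a0: "a \<ge> 0" and b0: "b \<ge> 0" using nA_real nB_real unfolding a_def b_def by auto
  have na: "nT dA (rA dB \<tau>) X = complex_of_real a" using nA_real unfolding a_def by simp
  have nb: "nT dB (rB dA dB \<tau>) Y = complex_of_real b" using nB_real unfolding b_def by simp
  have cs: "(cmod (cT dA dB \<tau> X Y))^2 \<le> a * b" using cs_main unfolding a_def b_def .
  have mc0: "0 \<le> max_corr dA dB \<tau>" by (rule max_corr_nonneg[OF dens])
  show ?thesis
  proof (cases "a = 0 \<or> b = 0")
    case True
    then have "(cmod (cT dA dB \<tau> X Y))^2 \<le> 0" using cs by auto
    then have "cmod (cT dA dB \<tau> X Y) = 0" by simp
    then show ?thesis using mc0 by simp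
  next
    case False
    then have ap: "a > 0" and bp: "b > 0" using a0 b0 by auto
    define c1 where "c1 = complex_of_real (1 / sqrt a)"
    define c2 where "c2 = complex_of_real (1 / sqrt b)"
    define Xn where "Xn = c1 \<cdot>\<^sub>m X"
    define Yn where "Yn = c2 \<cdot>\<^sub>m Y"
    have Xn: "Xn \<in> carrier_mat dA dA" and Yn: "Yn \<in> carrier_mat dB dB" using X Y unfolding Xn_def Yn_def by auto
    have c1c: "c1 * cnj c1 = complex_of_real (1/a)" unfolding c1_def using ap
      by (simp flip: of_real_mult)
    have c2c: "c2 * cnj c2 = complex_of_real (1/b)" unfolding c2_def using bp
      by (simp flip: of_real_mult)
    have e1: "mtrace (ptrace_B dA dB \<tau> * Xn) = 0" using link_mA[OF Xn] mT_smult[OF X] mX unfolding Xn_def by simp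
    have e2: "mtrace (ptrace_A dA dB \<tau> * Yn) = 0" using link_mB[OF Yn] mT_smult[OF Y] mY unfolding Yn_def by simp
    have e3: "mtrace (ptrace_B dA dB \<tau> * Xn * dagger Xn) = 1"
      using link_nA[OF Xn] nT_smult[OF X] na c1c ap unfolding Xn_def by (simp flip: of_real_mult)
    have e4: "mtrace (ptrace_A dA dB \<tau> * Yn * dagger Yn) = 1"
      using link_nB[OF Yn] nT_smult[OF Y] nb c2c bp unfolding Yn_def by (simp flip: of_real_mult)
    have "cmod (mtrace (\<tau> * kron Xn (dagger Yn))) \<in> mcset dA dB \<tau>"
      unfolding mcset_def using Xn Yn e1 e2 e3 e4 by blast
    then have le: "cmod (mtrace (\<tau> * kron Xn (dagger Yn))) \<le> max_corr dA dB \<tau>" by (rule max_corr_upper[OF dens])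
    have "mtrace (\<tau> * kron Xn (dagger Yn)) = (c1 * cnj c2) * cT dA dB \<tau> X Y"
      using link_corr[OF C Xn Yn] cT_smult[OF X Y] unfolding Xn_def Yn_def by simp
    then have "cmod (mtrace (\<tau> * kron Xn (dagger Yn))) = cmod (cT dA dB \<tau> X Y) / (sqrt a * sqrt b)"
      unfolding c1_def c2_def using ap bp by (simp add: norm_mult norm_divide flip: of_real_mult)
    then have "cmod (cT dA dB \<tau> X Y) \<le> sqrt a * sqrt b * max_corr dA dB \<tau>"
      using le ap bp by (simp add: divide_le_eq mult.commute)
    also have "\<dots> \<le> max_corr dA dB \<tau>"
    proof -
      have "sqrt a \<le> 1" "sqrt b \<le> 1" using a1 b1 unfolding a_def b_def by auto
      then have "sqrt a * sqrt b \<le> 1" using a0 b0 by (simp add: mult_le_one)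
      then show ?thesis using mc0 mult_right_mono[of "sqrt a * sqrt b" 1 "max_corr dA dB \<tau>"] by simp
    qed
    finally show ?thesis .
  qed
qed

lemma mc_mono:
  assumes dens: "density (dA*dB) \<tau>" and P: "cptp dA dA' \<Phi>" and Q: "cptp dB dB' \<Psi>"
  shows "max_corr dA' dB' (tensor_map dA dB dA' dB' \<Phi> \<Psi> \<tau>) \<le> max_corr dA dB \<tau>"
proof -
  let ?t = "tensor_map dA dB dA' dB' \<Phi> \<Psi> \<tau>"
  obtain w where V: "vdl dA dB \<tau> {..<dA*dB} w" using vd_of_density[OF dens] by blast
  obtain K where KA: "krs dA dA' \<Phi> K" using krs_of_cptp[OF P] by blast
  obtain L where KB: "krs dB dB' \<Psi> L" using krs_of_cptp[OF Q] by blast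
  have Ct: "?t \<in> carrier_mat (dA'*dB') (dA'*dB')" by (rule tm_carrier)
  show ?thesis unfolding max_corr_mcset[of dA' dB']
  proof (rule cSup_least)
    show "insert 0 (mcset dA' dB' ?t) \<noteq> {}" by simp
    fix x assume "x \<in> insert 0 (mcset dA' dB' ?t)"
    then consider "x = 0" | "x \<in> mcset dA' dB' ?t" by blast
    then show "x \<le> max_corr dA dB \<tau>"
    proof cases
      case 1 then show ?thesis using max_corr_nonneg[OF dens] by simp
    next
      case 2
      then obtain X' Y' where X': "X' \<in> carrier_mat dA' dA'" and Y': "Y' \<in> carrier_mat dB' dB'"
        and m1: "mtrace (ptrace_B dA' dB' ?t * X') = 0" and m2: "mtrace (ptrace_A dA' dB' ?t * Y') = 0"
        and n1: "mtrace (ptrace_B dA' dB' ?t * X' * dagger X') = 1"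
        and n2: "mtrace (ptrace_A dA' dB' ?t * Y' * dagger Y') = 1"
        and x: "x = cmod (mtrace (?t * kron X' (dagger Y')))"
        unfolding mcset_def by blast
      define X where "X = adj dA dA' \<Phi> X'"
      define Y where "Y = adj dB dB' \<Psi> Y'"
      have X: "X \<in> carrier_mat dA dA" and Y: "Y \<in> carrier_mat dB dB" unfolding X_def Y_def by (simp_all add: adj_carrier)
      have xe: "x = cmod (cT dA dB \<tau> X Y)" unfolding x link_corr[OF Ct X' Y'] cT_tm[OF Q] X_def Y_def ..
      have mX: "mT dA (rA dB \<tau>) X = 0" using m1 unfolding link_mA[OF X'] mT_tmA[OF Q] X_def .
      have mY: "mT dB (rB dA dB \<tau>) Y = 0" using m2 unfolding link_mB[OF Y'] mT_tmB[OF P] Y_def .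
      have XX: "X' * dagger X' \<in> carrier_mat dA' dA'" using X' dagger_carrier[OF X'] by simp
      have YY: "Y' * dagger Y' \<in> carrier_mat dB' dB'" using Y' dagger_carrier[OF Y'] by simp
      have a1: "Re (nT dA (rA dB \<tau>) X) \<le> 1"
      proof -
        have "Re (nT dA (rA dB \<tau>) X) \<le> Re (mT dA (rA dB \<tau>) (adj dA dA' \<Phi> (X' * dagger X')))"
          unfolding X_def
          by (rule krs.ks_R[OF KA X', of "{..<dA*dB} \<times> {..<dB}"]) (auto simp: vdl.rA_vd[OF V])
        also have "mT dA (rA dB \<tau>) (adj dA dA' \<Phi> (X' * dagger X')) = 1"
          using n1 unfolding link_nA[OF X'] nT_mT[OF X'] mT_tmA[OF Q] .
        finally show ?thesis by simp
      qed
      have b1: "Re (nT dB (rB dA dB \<tau>) Y) \<le> 1"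
      proof -
        have "Re (nT dB (rB dA dB \<tau>) Y) \<le> Re (mT dB (rB dA dB \<tau>) (adj dB dB' \<Psi> (Y' * dagger Y')))"
          unfolding Y_def
          by (rule krs.ks_R[OF KB Y', of "{..<dA*dB} \<times> {..<dA}"]) (auto simp: vdl.rB_vd[OF V])
        also have "mT dB (rB dA dB \<tau>) (adj dB dB' \<Psi> (Y' * dagger Y')) = 1"
          using n2 unfolding link_nB[OF Y'] nT_mT[OF Y'] mT_tmB[OF P] .
        finally show ?thesis by simp
      qed
      show ?thesis unfolding xe by (rule normalize_pair[OF V dens X Y mX mY a1 b1])
    qed
  qed
qed



lemma tm_trace:
  assumes P: "cptp dA dA' \<Phi>" and Q: "cptp dB dB' \<Psi>"
  shows "mtrace (tensor_map dA dB dA' dB' \<Phi> \<Psi> \<rho>) = (\<Sum>i<dA. \<Sum>k<dB. \<rho>$$(i*dB+k, i*dB+k))"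
proof -
  let ?t = "tensor_map dA dB dA' dB' \<Phi> \<Psi> \<rho>"
  have "mtrace ?t = (\<Sum>a<dA'. \<Sum>b<dB'. ?t $$ (a*dB'+b, a*dB'+b))"
    unfolding mtrace_def using tm_carrier[of dA dB dA' dB' \<Phi> \<Psi> \<rho>] by (simp add: sum_prod_idx)
  also have "\<dots> = (\<Sum>a<dA'. \<Sum>b<dB'. \<Sum>a'<dA'. \<Sum>b'<dB'. ?t $$ (a*dB'+b, a'*dB'+b') * ((if a' = a then 1 else 0) * (if b' = b then 1 else 0)))"
    by (intro sum.cong refl) (simp add: ifz1 ifz2)
  also have "\<dots> = (\<Sum>i<dA. \<Sum>k<dB. \<Sum>j<dA. \<Sum>l<dB. \<rho>$$(i*dB+k, j*dB+l) *
        (\<Sum>a<dA'. \<Sum>b<dB'. \<Sum>a'<dA'. \<Sum>b'<dB'. \<Phi> (munit dA i j) $$ (a,a') * \<Psi> (munit dB k l) $$ (b,b') * ((if a' = a then 1 else 0) * (if b' = b then 1 else 0))))"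
    by (rule tm_func)
  also have "\<dots> = (\<Sum>i<dA. \<Sum>k<dB. \<Sum>j<dA. \<Sum>l<dB. \<rho>$$(i*dB+k, j*dB+l) * ((if i = j then 1 else 0) * (if k = l then 1 else 0)))"
  proof (intro sum.cong refl)
    fix i k j l assume i: "i \<in> {..<dA}" and k: "k \<in> {..<dB}" and j: "j \<in> {..<dA}" and l: "l \<in> {..<dB}"
    have "(\<Sum>a<dA'. \<Sum>b<dB'. \<Sum>a'<dA'. \<Sum>b'<dB'. \<Phi> (munit dA i j) $$ (a,a') * \<Psi> (munit dB k l) $$ (b,b') * ((if a' = a then 1 else 0) * (if b' = b then 1 else 0)))
       = (\<Sum>a<dA'. \<Sum>b<dB'. \<Phi> (munit dA i j) $$ (a,a) * \<Psi> (munit dB k l) $$ (b,b))"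
      by (intro sum.cong refl) (simp add: ifz1 ifz2)
    also have "\<dots> = (\<Sum>a<dA'. \<Phi> (munit dA i j) $$ (a,a)) * (\<Sum>b<dB'. \<Psi> (munit dB k l) $$ (b,b))"
      by (simp add: sum_product)
    also have "\<dots> = (if i = j then 1 else 0) * (if k = l then 1 else 0)"
      using tp_munit[OF P] tp_munit[OF Q] i j k l by simp
    finally show "\<rho>$$(i*dB+k, j*dB+l) * (\<Sum>a<dA'. \<Sum>b<dB'. \<Sum>a'<dA'. \<Sum>b'<dB'. \<Phi> (munit dA i j) $$ (a,a') * \<Psi> (munit dB k l) $$ (b,b') * ((if a' = a then 1 else 0) * (if b' = b then 1 else 0)))
       = \<rho>$$(i*dB+k, j*dB+l) * ((if i = j then 1 else 0) * (if k = l then 1 else 0))" by simp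
  qed
  also have "\<dots> = (\<Sum>i<dA. \<Sum>k<dB. \<rho>$$(i*dB+k, i*dB+k))"
    by (intro sum.cong refl) (simp add: ifz1 ifz2 if_distrib[where f="\<lambda>x. _ * x"] sum.delta cong: if_cong)
  finally show ?thesis .
qed

lemma density_trace: "\<rho> \<in> carrier_mat (dA*dB) (dA*dB) \<Longrightarrow> mtrace \<rho> = (\<Sum>i<dA. \<Sum>k<dB. \<rho>$$(i*dB+k, i*dB+k))"
  unfolding mtrace_def by (simp add: sum_prod_idx)

lemma psd_iff_pf: "psd n M \<longleftrightarrow> M \<in> carrier_mat n n \<and> pf n (\<lambda>i j. M$$(i,j))"
  unfolding psd_def pf_def qf_def Let_def by auto

lemma tm_psd:
  assumes T: "psd (dA*dB) \<tau>" and P: "cptp dA dA' \<Phi>" and Q: "cptp dB dB' \<Psi>"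
  shows "psd (dA'*dB') (tensor_map dA dB dA' dB' \<Phi> \<Psi> \<tau>)"
proof -
  let ?t = "tensor_map dA dB dA' dB' \<Phi> \<Psi> \<tau>"
  obtain K where KA: "krs dA dA' \<Phi> K" using krs_of_cptp[OF P] by blast
  obtain L where KB: "krs dB dB' \<Psi> L" using krs_of_cptp[OF Q] by blast
  have pfT: "pf (dA*dB) (\<lambda>i j. \<tau>$$(i,j))" using T psd_iff_pf by blast
  have "pf (dA'*dB') (\<lambda>i j. ?t$$(i,j))"
    unfolding pf_def
  proof
    fix v :: "nat \<Rightarrow> complex"
    define z where "z n m j l = (\<Sum>a'<dA'. \<Sum>b'<dB'. cnj (K n a' j) * cnj (L m b' l) * v (a'*dB'+b'))" for n m j l
    define u where "u n m r = z n m (r div dB) (r mod dB)" for n m r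
    have p1: "qf (dA'*dB') (\<lambda>i j. ?t$$(i,j)) v = (\<Sum>a<dA'. \<Sum>b<dB'. \<Sum>a'<dA'. \<Sum>b'<dB'. ?t $$ (a*dB'+b, a'*dB'+b') * (cnj (v (a*dB'+b)) * v (a'*dB'+b')))"
      unfolding qf_def by (simp add: sum_prod_idx mult_ac)
    also have "\<dots> = (\<Sum>i<dA. \<Sum>k<dB. \<Sum>j<dA. \<Sum>l<dB. \<tau>$$(i*dB+k, j*dB+l) *
        (\<Sum>a<dA'. \<Sum>b<dB'. \<Sum>a'<dA'. \<Sum>b'<dB'. \<Phi> (munit dA i j) $$ (a,a') * \<Psi> (munit dB k l) $$ (b,b') * (cnj (v (a*dB'+b)) * v (a'*dB'+b'))))"
      by (rule tm_func)
    also have "\<dots> = (\<Sum>i<dA. \<Sum>k<dB. \<Sum>j<dA. \<Sum>l<dB. \<tau>$$(i*dB+k, j*dB+l) *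
        (\<Sum>n<dA*dA'. \<Sum>m<dB*dB'. cnj (z n m i k) * z n m j l))"
    proof (intro sum.cong refl)
      fix i k j l assume i: "i \<in> {..<dA}" and k: "k \<in> {..<dB}" and j: "j \<in> {..<dA}" and l: "l \<in> {..<dB}"
      have "(\<Sum>a<dA'. \<Sum>b<dB'. \<Sum>a'<dA'. \<Sum>b'<dB'. \<Phi> (munit dA i j) $$ (a,a') * \<Psi> (munit dB k l) $$ (b,b') * (cnj (v (a*dB'+b)) * v (a'*dB'+b')))
        = (\<Sum>a<dA'. \<Sum>b<dB'. \<Sum>a'<dA'. \<Sum>b'<dB'. (\<Sum>n<dA*dA'. K n a i * cnj (K n a' j)) * (\<Sum>m<dB*dB'. L m b k * cnj (L m b' l)) * (cnj (v (a*dB'+b)) * v (a'*dB'+b')))"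
        using i j k l by (intro sum.cong refl) (simp add: krs.kr[OF KA] krs.kr[OF KB])
      also have "\<dots> = (\<Sum>n<dA*dA'. \<Sum>m<dB*dB'. cnj (z n m i k) * z n m j l)"
        unfolding z_def
        apply (simp only: cnj_sum complex_cnj_mult complex_cnj_cnj sum_distrib_left sum_distrib_right)
        apply (simp only: sum.cartesian_product)
        apply (rule sum.reindex_bij_witness[where j="\<lambda>(a,b,a',b',m,n). (n,m,a',b',a,b)" and i="\<lambda>(n,m,a',b',a,b). (a,b,a',b',m,n)"])
        apply (auto simp: mult_ac)
        done
      finally show "\<tau>$$(i*dB+k, j*dB+l) * (\<Sum>a<dA'. \<Sum>b<dB'. \<Sum>a'<dA'. \<Sum>b'<dB'. \<Phi> (munit dA i j) $$ (a,a') * \<Psi> (munit dB k l) $$ (b,b') * (cnj (v (a*dB'+b)) * v (a'*dB'+b')))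
        = \<tau>$$(i*dB+k, j*dB+l) * (\<Sum>n<dA*dA'. \<Sum>m<dB*dB'. cnj (z n m i k) * z n m j l)" by simp
    qed
    also have "\<dots> = (\<Sum>n<dA*dA'. \<Sum>m<dB*dB'. \<Sum>i<dA. \<Sum>k<dB. \<Sum>j<dA. \<Sum>l<dB. cnj (z n m i k) * \<tau>$$(i*dB+k, j*dB+l) * z n m j l)"
      apply (simp only: sum_distrib_left sum_distrib_right)
      apply (simp only: sum.cartesian_product)
      apply (rule sum.reindex_bij_witness[where j="\<lambda>(i,k,j,l,n,m). (n,m,i,k,j,l)" and i="\<lambda>(n,m,i,k,j,l). (i,k,j,l,n,m)"])
      apply (auto simp: mult_ac)
      done
    also have "\<dots> = (\<Sum>n<dA*dA'. \<Sum>m<dB*dB'. qf (dA*dB) (\<lambda>i j. \<tau>$$(i,j)) (u n m))"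
    proof (rule sum.cong[OF refl], rule sum.cong[OF refl])
      fix n m
      show "(\<Sum>i<dA. \<Sum>k<dB. \<Sum>j<dA. \<Sum>l<dB. cnj (z n m i k) * \<tau>$$(i*dB+k, j*dB+l) * z n m j l) = qf (dA*dB) (\<lambda>i j. \<tau>$$(i,j)) (u n m)"
        unfolding qf_def u_def sum_prod_idx by (intro sum.cong refl) (simp add: div_mod_idx)
    qed
    finally have e: "qf (dA'*dB') (\<lambda>i j. ?t$$(i,j)) v = (\<Sum>n<dA*dA'. \<Sum>m<dB*dB'. qf (dA*dB) (\<lambda>i j. \<tau>$$(i,j)) (u n m))" .
    show "Im (qf (dA'*dB') (\<lambda>i j. ?t$$(i,j)) v) = 0 \<and> 0 \<le> Re (qf (dA'*dB') (\<lambda>i j. ?t$$(i,j)) v)"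
      unfolding e using pf_qf[OF pfT] by (simp add: Im_sum Re_sum sum_nonneg)
  qed
  then show ?thesis using psd_iff_pf tm_carrier by blast
qed



lemma tm_lin:
  assumes A: "A \<in> carrier_mat (dA*dB) (dA*dB)" and B: "B \<in> carrier_mat (dA*dB) (dA*dB)"
  shows "tensor_map dA dB dA' dB' \<Phi> \<Psi> (c \<cdot>\<^sub>m A + B) = c \<cdot>\<^sub>m tensor_map dA dB dA' dB' \<Phi> \<Psi> A + tensor_map dA dB dA' dB' \<Phi> \<Psi> B"
proof (rule eq_matI)
  fix r s assume "r < dim_row (c \<cdot>\<^sub>m tensor_map dA dB dA' dB' \<Phi> \<Psi> A + tensor_map dA dB dA' dB' \<Phi> \<Psi> B)"
    "s < dim_col (c \<cdot>\<^sub>m tensor_map dA dB dA' dB' \<Phi> \<Psi> A + tensor_map dA dB dA' dB' \<Phi> \<Psi> B)"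
  then have rs: "r < dA'*dB'" "s < dA'*dB'" by (auto simp: tensor_map_def)
  have e: "(c \<cdot>\<^sub>m A + B) $$ (i*dB+k, j*dB+l) = c * A $$ (i*dB+k, j*dB+l) + B $$ (i*dB+k, j*dB+l)"
    if "i < dA" "k < dB" "j < dA" "l < dB" for i k j l
    using that A B div_mod_idx[OF that(1,2)] div_mod_idx[OF that(3,4)] by simp
  show "tensor_map dA dB dA' dB' \<Phi> \<Psi> (c \<cdot>\<^sub>m A + B) $$ (r, s) =
        (c \<cdot>\<^sub>m tensor_map dA dB dA' dB' \<Phi> \<Psi> A + tensor_map dA dB dA' dB' \<Phi> \<Psi> B) $$ (r, s)"
  proof -
    have "tensor_map dA dB dA' dB' \<Phi> \<Psi> (c \<cdot>\<^sub>m A + B) $$ (r, s) =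
      (\<Sum>i<dA. \<Sum>j<dA. \<Sum>k<dB. \<Sum>l<dB. (c * A $$ (i*dB+k, j*dB+l) + B $$ (i*dB+k, j*dB+l)) * \<Phi> (munit dA i j) $$ (r div dB', s div dB')
          * \<Psi> (munit dB k l) $$ (r mod dB', s mod dB'))"
      using rs unfolding tensor_map_def by (simp, intro sum.cong refl) (simp add: e)
    then show ?thesis using rs unfolding tensor_map_def
      by (simp add: algebra_simps sum.distrib sum_distrib_left)
  qed
qed (auto simp: tensor_map_def)

lemma tm_zero: "tensor_map dA dB dA' dB' \<Phi> \<Psi> (0\<^sub>m (dA*dB) (dA*dB)) = 0\<^sub>m (dA'*dB') (dA'*dB')"
proof (rule eq_matI)
  fix r s assume "r < dim_row (0\<^sub>m (dA'*dB') (dA'*dB') :: complex mat)" "s < dim_col (0\<^sub>m (dA'*dB') (dA'*dB') :: complex mat)"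
  then have rs: "r < dA'*dB'" "s < dA'*dB'" by auto
  have e: "(0\<^sub>m (dA*dB) (dA*dB) :: complex mat) $$ (i*dB+k, j*dB+l) = 0"
    if "i < dA" "k < dB" "j < dA" "l < dB" for i k j l
    using that div_mod_idx[OF that(1,2)] div_mod_idx[OF that(3,4)] by simp
  show "tensor_map dA dB dA' dB' \<Phi> \<Psi> (0\<^sub>m (dA*dB) (dA*dB)) $$ (r, s) = (0\<^sub>m (dA'*dB') (dA'*dB') :: complex mat) $$ (r, s)"
    using rs unfolding tensor_map_def by (simp add: e)
qed (auto simp: tensor_map_def)

lemma tm_foldr:
  assumes "\<forall>(p,\<tau>)\<in>set D. \<tau> \<in> carrier_mat (dA*dB) (dA*dB)"
  shows "foldr (\<lambda>(p, \<tau>) acc. complex_of_real p \<cdot>\<^sub>m \<tau> + acc) D (0\<^sub>m (dA*dB) (dA*dB)) \<in> carrier_mat (dA*dB) (dA*dB) \<and>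
    tensor_map dA dB dA' dB' \<Phi> \<Psi> (foldr (\<lambda>(p, \<tau>) acc. complex_of_real p \<cdot>\<^sub>m \<tau> + acc) D (0\<^sub>m (dA*dB) (dA*dB)))
    = foldr (\<lambda>(p, \<tau>) acc. complex_of_real p \<cdot>\<^sub>m \<tau> + acc) (map (\<lambda>(p,\<tau>). (p, tensor_map dA dB dA' dB' \<Phi> \<Psi> \<tau>)) D) (0\<^sub>m (dA'*dB') (dA'*dB'))"
  using assms
proof (induction D)
  case Nil then show ?case by (simp add: tm_zero)
next
  case (Cons x D)
  obtain p \<tau> where x: "x = (p, \<tau>)" by (cases x)
  have t: "\<tau> \<in> carrier_mat (dA*dB) (dA*dB)" using Cons.prems x by auto
  have IH: "foldr (\<lambda>(p, \<tau>) acc. complex_of_real p \<cdot>\<^sub>m \<tau> + acc) D (0\<^sub>m (dA*dB) (dA*dB)) \<in> carrier_mat (dA*dB) (dA*dB) \<and>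
    tensor_map dA dB dA' dB' \<Phi> \<Psi> (foldr (\<lambda>(p, \<tau>) acc. complex_of_real p \<cdot>\<^sub>m \<tau> + acc) D (0\<^sub>m (dA*dB) (dA*dB)))
    = foldr (\<lambda>(p, \<tau>) acc. complex_of_real p \<cdot>\<^sub>m \<tau> + acc) (map (\<lambda>(p,\<tau>). (p, tensor_map dA dB dA' dB' \<Phi> \<Psi> \<tau>)) D) (0\<^sub>m (dA'*dB') (dA'*dB'))"
    using Cons by auto
  show ?case using IH t tm_lin[OF t IH[THEN conjunct1]] x by auto
qed

lemma tm_density:
  assumes "density (dA*dB) \<tau>" "cptp dA dA' \<Phi>" "cptp dB dB' \<Psi>"
  shows "density (dA'*dB') (tensor_map dA dB dA' dB' \<Phi> \<Psi> \<tau>)"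
  using assms tm_psd[of dA dB \<tau> dA' \<Phi> dB' \<Psi>] tm_trace[OF assms(2,3)] density_trace[OF density_carrier[OF assms(1)]]
  unfolding density_def by simp

lemma max_list_nonneg:
  assumes "D \<noteq> []" "\<forall>(p,\<tau>)\<in>set D. density (dA*dB) \<tau>"
  shows "0 \<le> Max (set (map (\<lambda>(p, \<tau>). max_corr dA dB \<tau>) D))"
proof -
  obtain x where x: "x \<in> set D" using assms(1) by (cases D) auto
  obtain p \<tau> where xe: "x = (p, \<tau>)" by (cases x)
  have "max_corr dA dB \<tau> \<in> set (map (\<lambda>(p, \<tau>). max_corr dA dB \<tau>) D)" using x xe by force
  moreover have "0 \<le> max_corr dA dB \<tau>" using assms(2) x xe max_corr_nonneg by auto
  ultimately show ?thesis by (meson List.finite_set Max_ge order_trans)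
qed

theorem theorem4:
  fixes dA dB dA' dB' :: nat
    and \<rho> :: "complex mat"
    and \<Phi> \<Psi> :: "complex mat \<Rightarrow> complex mat"
  assumes "density (dA * dB) \<rho>"
    and "cptp dA dA' \<Phi>"
    and "cptp dB dB' \<Psi>"
  shows "max_ent dA dB \<rho> \<ge> max_ent dA' dB' (tensor_map dA dB dA' dB' \<Phi> \<Psi> \<rho>)"
proof -
  note dens = assms(1) and P = assms(2) and Q = assms(3)
  let ?\<sigma> = "tensor_map dA dB dA' dB' \<Phi> \<Psi> \<rho>"
  let ?f = "\<lambda>(p, \<tau>) acc. complex_of_real p \<cdot>\<^sub>m \<tau> + acc"
  let ?g = "\<lambda>(p,\<tau>). (p, tensor_map dA dB dA' dB' \<Phi> \<Psi> \<tau>)"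
  define S where "S = {Max (set (map (\<lambda>(p, \<tau>). max_corr dA dB \<tau>) D)) | D. decomposition dA dB \<rho> D}"
  define S' where "S' = {Max (set (map (\<lambda>(p, \<tau>). max_corr dA' dB' \<tau>) D)) | D. decomposition dA' dB' ?\<sigma> D}"
  have C: "\<rho> \<in> carrier_mat (dA*dB) (dA*dB)" using density_carrier[OF dens] .
  have "decomposition dA dB \<rho> [(1, \<rho>)]"
    unfolding decomposition_def using dens C by (auto intro!: eq_matI)
  then have Sne: "S \<noteq> {}" unfolding S_def by blast
  have bdd: "bdd_below S'"
  proof (rule bdd_belowI[of _ 0])
    fix y assume "y \<in> S'"
    then obtain D where D: "decomposition dA' dB' ?\<sigma> D" and y: "y = Max (set (map (\<lambda>(p, \<tau>). max_corr dA' dB' \<tau>) D))"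
      unfolding S'_def by blast
    show "0 \<le> y" unfolding y using D unfolding decomposition_def by (intro max_list_nonneg) auto
  qed
  have "Inf S' \<le> Inf S"
  proof (rule cInf_greatest[OF Sne])
    fix m assume "m \<in> S"
    then obtain D where D: "decomposition dA dB \<rho> D" and m: "m = Max (set (map (\<lambda>(p, \<tau>). max_corr dA dB \<tau>) D))"
      unfolding S_def by blast
    have Dne: "D \<noteq> []" and Dd: "\<forall>(p,\<tau>)\<in>set D. p \<ge> 0 \<and> density (dA*dB) \<tau>"
      and Df: "\<rho> = foldr ?f D (0\<^sub>m (dA*dB) (dA*dB))"
      using D unfolding decomposition_def by auto
    have Dc: "\<forall>(p,\<tau>)\<in>set D. \<tau> \<in> carrier_mat (dA*dB) (dA*dB)" using Dd density_carrier by auto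
    define D' where "D' = map ?g D"
    have D': "decomposition dA' dB' ?\<sigma> D'"
      unfolding decomposition_def
    proof (intro conjI)
      show "D' \<noteq> []" using Dne unfolding D'_def by simp
      show "\<forall>(p, \<tau>)\<in>set D'. 0 \<le> p \<and> density (dA' * dB') \<tau>"
        using Dd tm_density[OF _ P Q] unfolding D'_def by auto
      show "?\<sigma> = foldr ?f D' (0\<^sub>m (dA' * dB') (dA' * dB'))"
        using tm_foldr[OF Dc, of dA' dB' \<Phi> \<Psi>] Df unfolding D'_def by simp
    qed
    have inS': "Max (set (map (\<lambda>(p, \<tau>). max_corr dA' dB' \<tau>) D')) \<in> S'" unfolding S'_def using D' by blast
    have le: "Max (set (map (\<lambda>(p, \<tau>). max_corr dA' dB' \<tau>) D')) \<le> m"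
      unfolding m
    proof (rule Max.boundedI)
      show "finite (set (map (\<lambda>(p, \<tau>). max_corr dA' dB' \<tau>) D'))" by simp
      show "set (map (\<lambda>(p, \<tau>). max_corr dA' dB' \<tau>) D') \<noteq> {}" using Dne unfolding D'_def by simp
      fix y assume "y \<in> set (map (\<lambda>(p, \<tau>). max_corr dA' dB' \<tau>) D')"
      then obtain p \<tau> where pt: "(p, \<tau>) \<in> set D" and y: "y = max_corr dA' dB' (tensor_map dA dB dA' dB' \<Phi> \<Psi> \<tau>)"
        unfolding D'_def by auto
      have "y \<le> max_corr dA dB \<tau>" unfolding y using mc_mono[OF _ P Q] Dd pt by auto
      also have "\<dots> \<le> Max (set (map (\<lambda>(p, \<tau>). max_corr dA dB \<tau>) D))"
        using pt by (intro Max_ge) force+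
      finally show "y \<le> Max (set (map (\<lambda>(p, \<tau>). max_corr dA dB \<tau>) D))" .
    qed
    show "Inf S' \<le> m" using cInf_lower[OF inS' bdd] le by linarith
  qed
  then show ?thesis unfolding max_ent_def S_def S'_def .
qed


end
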